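(* Let $r\in(0,1/2)$ and consider the asynchronous space-time-coded scheme described in the context. Assume the waveform $s$ is supported in $[0,2T_s]$, the relative delay is $\tau\in(0,T_s)$, and the linear-independence condition holds with $M=2$. Then $$d_{A\text{-}stc}(r):=\lim_{\mathrm{SNR}\to\infty}-\frac{\log\Pr[I_{A\text{-}stc}<R(\mathrm{SNR})]}{\log\mathrm{SNR}}=3(1-2r),$$ which is the same as the tradeoff of the synchronous space-time-coded scheme.
   Context: Network: a source $N_S$, two relays $N_{R_1},N_{R_2}$ and a destination $N_D$. The gains $\alpha_{i,j}$, $i\in\{S,R_1,R_2\}$, $j\in\{R_1,R_2,D\}$, $i\neq j$, are mutually independent zero-mean circularly symmetric complex Gaussian random variables with variances $\sigma^2_{i,j}>0$. For $\mathrm{SNR}>0$ set $\rho_0=\frac23\mathrm{SNR}$. The target rate is $R=R(\mathrm{SNR})=r\log_2(1+\mathrm{SNR}\,\sigma^2_{S,D})$ and all mutual informations are in bits. Relay $R_k$ belongs to the decoding set $\mathcal D(s)$ iff $\frac12\log_2(1+\rho_0|\alpha_{S,R_k}|^2)\ge R$. Waveform: $s$ is real-valued with $s(t)=0$ for $t\notin[0,MT_s]$ and $\int s^2=1$. Fix $\tau\in(0,T_s)$. - Let $S(t)=[s(t),s(t-\tau)]^T$, $G(k)=\int S(t)S(t-kT_s)^Tdt$, and $\tilde T(\omega)=\sum_{k\in\mathbb Z}G(k)e^{-jk\omega}$, with entries $\tilde T_{11}(\omega),\dots$. Note $\tilde T_{11}=\tilde T_{22}$. - Linear-independence condition: for every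 $\omega\in[-\pi,\pi]$, the functions $F_1(t,\omega)=\sum_{k=0}^M s(t+kT_s)e^{jk\omega}$ and $F_2(t,\omega)=\sum_{k=0}^M s(t-\tau+kT_s)e^{jk\omega}$ are linearly independent over $\mathbb C$ on $t\in[0,T_s]$. Mutual informations: - For a gain $\alpha$, $I_{E\text{-}SD}(\alpha)=\frac1{2\pi}\int_{-\pi}^{\pi}\log_2\left(1+\rho_0|\alpha|^2\tilde T_{11}(\omega)\right)d\omega$. - With $\alpha_1=\alpha_{R_1,D}$ and $\alpha_2=\alpha_{R_2,D}$, $$I_{E\text{-}MacA}=\frac1{2\pi}\int_{-\pi}^{\pi}\log_2\left(1+\rho_0(|\alpha_1|^2+|\alpha_2|^2)\tilde T_{11}(\omega)+\rho_0^2|\alpha_1|^2|\alpha_2|^2\det\tilde T(\omega)\right)d\omega.$$ The end-to-end mutual information $I_{A\text{-}stc}$ is: - $\frac12I_{E\text{-}SD}(\alpha_{S,D})$ if $\mathcal D(s)=\emptyset$; - $\frac12I_{E\text{-}SD}(\alpha_{S,D})+\frac12I_{E\text{-}SD}(\alpha_{R_j,D})$ if $\mathcal D(s)=\{R_j\}$; - $\frac12I_{E\text{-}SD}(\alpha_{S,D})+\frac12I_{E\text{-}MacA}$ if $|\mathcal D(s)|=2$. The probability $\Pr[I_{A\text{-}stc}<R]$ averages over the gains, including the randomness of $\mathcal D(s)$. *)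

theory Defs
  imports "HOL-Probability.Probability"
begin

datatype link = S_R1 | S_R2 | S_D | R1_R2 | R1_D | R2_R1 | R2_D

definition cgauss :: "real \<Rightarrow> complex measure" where
  "cgauss v = density lborel (\<lambda>z. ennreal (exp (- (cmod z)\<^sup>2 / v) / (pi * v)))"

definition gains_measure :: "(link \<Rightarrow> real) \<Rightarrow> (link \<Rightarrow> complex) measure" where
  "gains_measure \<sigma>2 = PiM UNIV (\<lambda>l. cgauss (\<sigma>2 l))"

text \<open>Components of S(t) = [s(t), s(t - tau)]^T, indexed by 0 and 1.\<close>
definition Scomp :: "(real \<Rightarrow> real) \<Rightarrow> real \<Rightarrow> nat \<Rightarrow> real \<Rightarrow> real" where
  "Scomp s \<tau> i t = (if i = 0 then s t else s (t - \<tau>))"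

definition Gmat :: "(real \<Rightarrow> real) \<Rightarrow> real \<Rightarrow> real \<Rightarrow> int \<Rightarrow> nat \<Rightarrow> nat \<Rightarrow> real" where
  "Gmat s Ts \<tau> k i j = (LINT t|lborel. Scomp s \<tau> i t * Scomp s \<tau> j (t - real_of_int k * Ts))"

definition Tmat :: "(real \<Rightarrow> real) \<Rightarrow> real \<Rightarrow> real \<Rightarrow> real \<Rightarrow> nat \<Rightarrow> nat \<Rightarrow> complex" where
  "Tmat s Ts \<tau> \<omega> i j = (\<Sum>\<^sub>\<infinity>k\<in>(UNIV::int set). complex_of_real (Gmat s Ts \<tau> k i j) * cis (- (real_of_int k * \<omega>)))"

definition detT :: "(real \<Rightarrow> real) \<Rightarrow> real \<Rightarrow> real \<Rightarrow> real \<Rightarrow> complex" where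
  "detT s Ts \<tau> \<omega> = Tmat s Ts \<tau> \<omega> 0 0 * Tmat s Ts \<tau> \<omega> 1 1 - Tmat s Ts \<tau> \<omega> 0 1 * Tmat s Ts \<tau> \<omega> 1 0"

text \<open>Linear-independence condition (functions on [0,T_s], as elements of L^2, i.e. a.e.).\<close>
definition Fw :: "(real \<Rightarrow> real) \<Rightarrow> real \<Rightarrow> nat \<Rightarrow> real \<Rightarrow> real \<Rightarrow> real \<Rightarrow> complex" where
  "Fw s Ts M d t \<omega> = (\<Sum>k=0..M. complex_of_real (s (t - d + real k * Ts)) * cis (real k * \<omega>))"

definition lin_indep_cond :: "(real \<Rightarrow> real) \<Rightarrow> real \<Rightarrow> real \<Rightarrow> nat \<Rightarrow> bool" where
  "lin_indep_cond s Ts \<tau> M \<longleftrightarrow>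
     (\<forall>\<omega>\<in>{-pi..pi}. \<forall>c1 c2 :: complex.
        (AE t in lborel. t \<in> {0..Ts} \<longrightarrow> c1 * Fw s Ts M 0 t \<omega> + c2 * Fw s Ts M \<tau> t \<omega> = 0)
        \<longrightarrow> c1 = 0 \<and> c2 = 0)"

definition rho0 :: "real \<Rightarrow> real" where
  "rho0 SNR = 2 / 3 * SNR"

definition rate :: "(link \<Rightarrow> real) \<Rightarrow> real \<Rightarrow> real \<Rightarrow> real" where
  "rate \<sigma>2 r SNR = r * log 2 (1 + SNR * \<sigma>2 S_D)"

text \<open>T~_11 and det T~ are real (T~ is Hermitian); we take real parts.\<close>
definition I_ESD :: "(real \<Rightarrow> real) \<Rightarrow> real \<Rightarrow> real \<Rightarrow> real \<Rightarrow> complex \<Rightarrow> real" where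
  "I_ESD s Ts \<tau> \<rho> a = 1 / (2 * pi) *
     (\<integral>\<omega>\<in>{-pi..pi}. log 2 (1 + \<rho> * (cmod a)\<^sup>2 * Re (Tmat s Ts \<tau> \<omega> 0 0)) \<partial>lborel)"

definition I_EMacA :: "(real \<Rightarrow> real) \<Rightarrow> real \<Rightarrow> real \<Rightarrow> real \<Rightarrow> complex \<Rightarrow> complex \<Rightarrow> real" where
  "I_EMacA s Ts \<tau> \<rho> a1 a2 = 1 / (2 * pi) *
     (\<integral>\<omega>\<in>{-pi..pi}. log 2 (1 + \<rho> * ((cmod a1)\<^sup>2 + (cmod a2)\<^sup>2) * Re (Tmat s Ts \<tau> \<omega> 0 0)
        + \<rho>\<^sup>2 * (cmod a1)\<^sup>2 * (cmod a2)\<^sup>2 * Re (detT s Ts \<tau> \<omega>)) \<partial>lborel)"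

definition decodes :: "real \<Rightarrow> real \<Rightarrow> complex \<Rightarrow> bool" where
  "decodes \<rho> R a \<longleftrightarrow> 1 / 2 * log 2 (1 + \<rho> * (cmod a)\<^sup>2) \<ge> R"

definition I_Astc :: "(real \<Rightarrow> real) \<Rightarrow> real \<Rightarrow> real \<Rightarrow> real \<Rightarrow> real \<Rightarrow> (link \<Rightarrow> complex) \<Rightarrow> real" where
  "I_Astc s Ts \<tau> \<rho> R g =
     (let d1 = decodes \<rho> R (g S_R1); d2 = decodes \<rho> R (g S_R2);
          base = 1 / 2 * I_ESD s Ts \<tau> \<rho> (g S_D) in
      if d1 \<and> d2 then base + 1 / 2 * I_EMacA s Ts \<tau> \<rho> (g R1_D) (g R2_D)
      else if d1 then base + 1 / 2 * I_ESD s Ts \<tau> \<rho> (g R1_D)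
      else if d2 then base + 1 / 2 * I_ESD s Ts \<tau> \<rho> (g R2_D)
      else base)"

definition outage_prob :: "(real \<Rightarrow> real) \<Rightarrow> real \<Rightarrow> real \<Rightarrow> (link \<Rightarrow> real) \<Rightarrow> real \<Rightarrow> real \<Rightarrow> real" where
  "outage_prob s Ts \<tau> \<sigma>2 r SNR =
     measure (gains_measure \<sigma>2)
       {g \<in> space (gains_measure \<sigma>2). I_Astc s Ts \<tau> (rho0 SNR) (rate \<sigma>2 r SNR) g < rate \<sigma>2 r SNR}"

end

theory Submission
  imports Defs "HOL-Real_Asymp.Real_Asymp"
begin


lemma integrable_shift_iff:
  fixes f :: "real \<Rightarrow> real"
  shows "integrable lborel (\<lambda>x. f (x + a)) \<longleftrightarrow> integrable lborel f"
  using lborel_integrable_real_affine_iff[of 1 f a] by (simp add: add.commute)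

lemma integral_shift:
  fixes f :: "real \<Rightarrow> real"
  shows "(LINT x|lborel. f (x + a)) = (LINT x|lborel. f x)"
  using lborel_integral_real_affine[of 1 f a] by (simp add: add.commute)

definition Hn :: "(real \<Rightarrow> real) \<Rightarrow> real \<Rightarrow> real \<Rightarrow> nat \<Rightarrow> nat \<Rightarrow> nat \<Rightarrow> nat \<Rightarrow> real" where
  "Hn s Ts \<tau> i j k l = (LINT t:{0..<Ts}|lborel. Scomp s \<tau> i (t + real k * Ts) * Scomp s \<tau> j (t + real l * Ts))"

locale wave =
  fixes s :: "real \<Rightarrow> real" and Ts \<tau> :: real
  assumes Ts: "0 < Ts" and tau: "0 < \<tau>" "\<tau> < Ts"
   and smeas[measurable]: "s \<in> borel_measurable lborel"
   and supp: "\<And>t. t \<notin> {0..2*Ts} \<Longrightarrow> s t = 0"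
   and sq: "integrable lborel (\<lambda>t. (s t)^2)"
begin

lemma smeas'[measurable]: "s \<in> borel_measurable borel"
  using smeas by simp

lemma Scomp_supp: "Scomp s \<tau> i t \<noteq> 0 \<Longrightarrow> 0 \<le> t \<and> t < 3 * Ts"
proof -
  assume h: "Scomp s \<tau> i t \<noteq> 0"
  show ?thesis
  proof (cases "i = 0")
    case True
    then have "s t \<noteq> 0" using h by (simp add: Scomp_def)
    then have "t \<in> {0..2*Ts}" using supp by blast
    then show ?thesis using Ts by auto
  next
    case False
    then have "s (t - \<tau>) \<noteq> 0" using h by (simp add: Scomp_def)
    then have "t - \<tau> \<in> {0..2*Ts}" using supp by blast
    then show ?thesis using Ts tau by auto
  qed
qed

lemma Scomp_zero: "t < 0 \<or> t \<ge> 3 * Ts \<Longrightarrow> Scomp s \<tau> i t = 0"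
  using Scomp_supp by force

lemma Scomp_meas[measurable]: "(\<lambda>t. Scomp s \<tau> i (f t)) \<in> borel_measurable M"
  if [measurable]: "f \<in> borel_measurable M"
  unfolding Scomp_def by measurable

lemma sq_shift: "integrable lborel (\<lambda>t. (s (t + a))^2)"
  using integrable_shift_iff[of "\<lambda>t. (s t)^2" a] sq by simp

lemma prod_int: "integrable lborel (\<lambda>t. s (t + a) * s (t + b))"
proof (rule Bochner_Integration.integrable_bound[OF Bochner_Integration.integrable_add[OF sq_shift[of a] sq_shift[of b]]])
  show "(\<lambda>t. s (t + a) * s (t + b)) \<in> borel_measurable lborel" by measurable
  show "AE x in lborel. norm (s (x + a) * s (x + b)) \<le> norm ((s (x + a))\<^sup>2 + (s (x + b))\<^sup>2)"
  proof (intro AE_I2)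
    fix x
    have "\<bar>s (x + a) * s (x + b)\<bar> \<le> (s (x + a))\<^sup>2 + (s (x + b))\<^sup>2"
    proof -
      have "2 * \<bar>s (x + a)\<bar> * \<bar>s (x + b)\<bar> \<le> \<bar>s (x + a)\<bar>\<^sup>2 + \<bar>s (x + b)\<bar>\<^sup>2"
        by (rule sum_squares_bound)
      moreover have "\<bar>s (x + a) * s (x + b)\<bar> \<le> 2 * \<bar>s (x + a)\<bar> * \<bar>s (x + b)\<bar>"
        by (simp add: abs_mult)
      ultimately show ?thesis by simp
    qed
    then show "norm (s (x + a) * s (x + b)) \<le> norm ((s (x + a))\<^sup>2 + (s (x + b))\<^sup>2)" by simp
  qed
qed

lemma Sprod_int: "integrable lborel (\<lambda>t. Scomp s \<tau> i (t + a) * Scomp s \<tau> j (t + b))"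
proof -
  have e: "\<And>i a t. Scomp s \<tau> i (t + a) = s (t + (if i = 0 then a else a - \<tau>))"
    unfolding Scomp_def by (auto simp: algebra_simps)
  show ?thesis unfolding e by (rule prod_int)
qed

lemma split3:
  fixes g :: "real \<Rightarrow> real"
  assumes g: "integrable lborel g" and gz: "\<And>u. u \<notin> {0..<3*Ts} \<Longrightarrow> g u = 0"
  shows "(LINT u|lborel. g u) = (\<Sum>k<3. LINT t:{0..<Ts}|lborel. g (t + real k * Ts))"
proof -
  define I where "I k = {real k * Ts..<real (Suc k) * Ts}" for k
  have pw: "g u = (\<Sum>k<3. indicator (I k) u * g u)" for u
  proof (cases "u \<in> {0..<3*Ts}")
    case True
    have e: "(\<Sum>k<3. indicator (I k) u * g u) = (indicator (I 0) u + indicator (I 1) u + indicator (I 2) u) * g u"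
      by (simp add: numeral_3_eq_3 numeral_2_eq_2 algebra_simps)
    have "indicator (I 0) u + indicator (I 1) u + indicator (I 2) u = (1::real)"
      using True by (cases "u < Ts"; cases "u < 2 * Ts") (auto simp: I_def indicator_def)
    then show ?thesis unfolding e by simp
  next
    case False then show ?thesis using gz by simp
  qed
  have "(LINT u|lborel. g u) = (LINT u|lborel. (\<Sum>k<3. indicator (I k) u * g u))"
    by (subst pw) simp
  also have "\<dots> = (\<Sum>k<3. LINT u|lborel. indicator (I k) u * g u)"
  proof (rule Bochner_Integration.integral_sum)
    fix k show "integrable lborel (\<lambda>u. indicator (I k) u * g u)"
      using integrable_mult_indicator[of "I k" lborel g] g by (simp add: I_def)
  qed
  also have "\<dots> = (\<Sum>k<3. LINT t:{0..<Ts}|lborel. g (t + real k * Ts))"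
  proof (rule sum.cong[OF refl])
    fix k
    have "(LINT u|lborel. indicator (I k) u * g u) = (LINT t|lborel. indicator (I k) (t + real k * Ts) * g (t + real k * Ts))"
      by (rule integral_shift[symmetric])
    also have "\<dots> = (LINT t:{0..<Ts}|lborel. g (t + real k * Ts))"
      unfolding set_lebesgue_integral_def
      by (intro Bochner_Integration.integral_cong refl) (auto simp: I_def indicator_def algebra_simps)
    finally show "(LINT u|lborel. indicator (I k) u * g u) = (LINT t:{0..<Ts}|lborel. g (t + real k * Ts))" .
  qed
  finally show ?thesis .
qed

end


context wave begin

definition Jr :: "nat \<Rightarrow> nat \<Rightarrow> real \<Rightarrow> real \<Rightarrow> real" where
  "Jr i j a b = (LINT t:{0..<Ts}|lborel. Scomp s \<tau> i (t + a * Ts) * Scomp s \<tau> j (t + b * Ts))"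

lemma Hn_Jr: "Hn s Ts \<tau> i j k l = Jr i j (real k) (real l)"
  unfolding Hn_def Jr_def ..

lemma Jr_zero: "b \<le> -1 \<or> 3 \<le> b \<Longrightarrow> Jr i j a b = 0"
proof -
  assume b: "b \<le> -1 \<or> 3 \<le> b"
  have "\<And>t. t \<in> {0..<Ts} \<Longrightarrow> Scomp s \<tau> j (t + b * Ts) = 0"
  proof -
    fix t assume t: "t \<in> {0..<Ts}"
    from b show "Scomp s \<tau> j (t + b * Ts) = 0"
    proof
      assume "b \<le> -1"
      then have "b * Ts \<le> -1 * Ts" using Ts by (intro mult_right_mono) auto
      then show ?thesis using t by (auto intro!: Scomp_zero)
    next
      assume "3 \<le> b"
      then have "b * Ts \<ge> 3 * Ts" using Ts by (intro mult_right_mono) auto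
      moreover have "0 \<le> t" using t by simp
      ultimately have "t + b * Ts \<ge> 3 * Ts" by linarith
      then show ?thesis by (intro Scomp_zero disjI2)
    qed
  qed
  then have z: "\<And>t. indicator {0..<Ts} t * (Scomp s \<tau> i (t + a * Ts) * Scomp s \<tau> j (t + b * Ts)) = (0::real)"
    by (simp add: indicator_def)
  show ?thesis unfolding Jr_def set_lebesgue_integral_def by (simp only: real_scaleR_def z) simp
qed

lemma G_split: "Gmat s Ts \<tau> m i j = (\<Sum>k<3. Jr i j (real k) (real k - of_int m))"
proof -
  have "Gmat s Ts \<tau> m i j = (LINT u|lborel. Scomp s \<tau> i u * Scomp s \<tau> j (u - of_int m * Ts))"
    unfolding Gmat_def ..
  also have "\<dots> = (\<Sum>k<3. LINT t:{0..<Ts}|lborel. Scomp s \<tau> i (t + real k * Ts) * Scomp s \<tau> j (t + real k * Ts - of_int m * Ts))"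
  proof (rule split3)
    show "integrable lborel (\<lambda>u. Scomp s \<tau> i u * Scomp s \<tau> j (u - real_of_int m * Ts))"
      using Sprod_int[of i 0 j "- of_int m * Ts"] by simp
    show "\<And>u. u \<notin> {0..<3 * Ts} \<Longrightarrow> Scomp s \<tau> i u * Scomp s \<tau> j (u - real_of_int m * Ts) = 0"
      using Scomp_zero by auto
  qed
  also have "\<dots> = (\<Sum>k<3. Jr i j (real k) (real k - of_int m))"
    unfolding Jr_def by (simp add: algebra_simps)
  finally show ?thesis .
qed

lemma G_zero: "3 \<le> \<bar>m\<bar> \<Longrightarrow> Gmat s Ts \<tau> m i j = 0"
proof -
  assume m: "3 \<le> \<bar>m\<bar>"
  have z: "Scomp s \<tau> i u * Scomp s \<tau> j (u - of_int m * Ts) = 0" for u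
  proof (rule ccontr)
    assume "Scomp s \<tau> i u * Scomp s \<tau> j (u - of_int m * Ts) \<noteq> 0"
    then have a: "0 \<le> u \<and> u < 3 * Ts" and b: "0 \<le> u - of_int m * Ts \<and> u - of_int m * Ts < 3 * Ts"
      using Scomp_supp[of i u] Scomp_supp[of j "u - of_int m * Ts"] by auto
    from m consider "3 \<le> m" | "m \<le> -3" by linarith
    then show False
    proof cases
      case 1
      then have "of_int m * Ts \<ge> 3 * Ts" using Ts by (intro mult_right_mono) auto
      then show False using a b by linarith
    next
      case 2
      then have "of_int m * Ts \<le> -3 * Ts" using Ts by (intro mult_right_mono) auto
      then show False using a b by linarith
    qed
  qed
  show ?thesis unfolding Gmat_def by (subst z) simp
qed

lemma Gm2: "Gmat s Ts \<tau> (-2) i j = Jr i j 0 2"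
  by (simp add: G_split numeral_3_eq_3 Jr_zero)
lemma Gm1: "Gmat s Ts \<tau> (-1) i j = Jr i j 0 1 + Jr i j 1 2"
  by (simp add: G_split numeral_3_eq_3 Jr_zero)
lemma G0: "Gmat s Ts \<tau> 0 i j = Jr i j 0 0 + Jr i j 1 1 + Jr i j 2 2"
  by (simp add: G_split numeral_3_eq_3 Jr_zero)
lemma G1: "Gmat s Ts \<tau> 1 i j = Jr i j 1 0 + Jr i j 2 1"
  by (simp add: G_split numeral_3_eq_3 Jr_zero)
lemma G2: "Gmat s Ts \<tau> 2 i j = Jr i j 2 0"
  by (simp add: G_split numeral_3_eq_3 Jr_zero)

lemma Tmat_finite: "Tmat s Ts \<tau> \<omega> i j =
   (\<Sum>m\<in>{-2..2}. complex_of_real (Gmat s Ts \<tau> m i j) * cis (- (real_of_int m * \<omega>)))"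
  unfolding Tmat_def
proof (subst infsum_cong_neutral[where T = "{-2..2}"])
  show "\<And>x. x \<in> UNIV - {- 2..2} \<Longrightarrow>
         complex_of_real (Gmat s Ts \<tau> x i j) * cis (- (real_of_int x * \<omega>)) = 0"
    by (auto intro!: G_zero)
qed auto

lemma int_m2_2: "{-2..2::int} = {-2,-1,0,1,2}" by auto

lemma Tmat_eq: "Tmat s Ts \<tau> \<omega> i j =
   (\<Sum>k<3. \<Sum>l<3. complex_of_real (Hn s Ts \<tau> i j k l) * cis ((real l - real k) * \<omega>))"
  unfolding Tmat_finite int_m2_2 Hn_Jr
  by (simp add: numeral_3_eq_3 Gm2 Gm1 G0 G1 G2 algebra_simps)

end


lemma psd_gram_int:
  fixes f :: "'p \<Rightarrow> 'a \<Rightarrow> real" and a :: "'p \<Rightarrow> complex"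
  assumes P: "finite P" and int: "\<And>p q. p \<in> P \<Longrightarrow> q \<in> P \<Longrightarrow> integrable M (\<lambda>t. f p t * f q t)"
  shows "integrable M (\<lambda>t. (cmod (\<Sum>p\<in>P. a p * complex_of_real (f p t)))\<^sup>2)"
proof -
  have pw: "(cmod (\<Sum>p\<in>P. a p * complex_of_real (f p t)))\<^sup>2
     = (\<Sum>p\<in>P. \<Sum>q\<in>P. (Re (a p) * Re (a q) + Im (a p) * Im (a q)) * (f p t * f q t))" for t
  proof -
    have "(cmod (\<Sum>p\<in>P. a p * complex_of_real (f p t)))\<^sup>2
        = (\<Sum>p\<in>P. Re (a p) * f p t)\<^sup>2 + (\<Sum>p\<in>P. Im (a p) * f p t)\<^sup>2"
      by (simp add: cmod_power2 Re_sum Im_sum)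
    also have "\<dots> = (\<Sum>p\<in>P. \<Sum>q\<in>P. (Re (a p) * Re (a q) + Im (a p) * Im (a q)) * (f p t * f q t))"
      by (simp add: power2_eq_square sum_product algebra_simps sum.distrib)
    finally show ?thesis .
  qed
  show ?thesis
    by (simp only: pw) (intro Bochner_Integration.integrable_sum integrable_mult_right int)
qed

lemma psd_gram:
  fixes f :: "'p \<Rightarrow> 'a \<Rightarrow> real" and a :: "'p \<Rightarrow> complex"
  assumes P: "finite P" and int: "\<And>p q. p \<in> P \<Longrightarrow> q \<in> P \<Longrightarrow> integrable M (\<lambda>t. f p t * f q t)"
  shows "(\<Sum>p\<in>P. \<Sum>q\<in>P. a p * cnj (a q) * complex_of_real (LINT t|M. f p t * f q t))
       = complex_of_real (LINT t|M. (cmod (\<Sum>p\<in>P. a p * complex_of_real (f p t)))\<^sup>2)"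
proof -
  define H where "H p q = (LINT t|M. f p t * f q t)" for p q
  have Hsym: "H p q = H q p" for p q unfolding H_def by (simp add: mult.commute)
  have pw: "(cmod (\<Sum>p\<in>P. a p * complex_of_real (f p t)))\<^sup>2
     = (\<Sum>p\<in>P. \<Sum>q\<in>P. (Re (a p) * Re (a q) + Im (a p) * Im (a q)) * (f p t * f q t))" for t
  proof -
    have "(cmod (\<Sum>p\<in>P. a p * complex_of_real (f p t)))\<^sup>2
        = (\<Sum>p\<in>P. Re (a p) * f p t)\<^sup>2 + (\<Sum>p\<in>P. Im (a p) * f p t)\<^sup>2"
      by (simp add: cmod_power2 Re_sum Im_sum)
    also have "\<dots> = (\<Sum>p\<in>P. \<Sum>q\<in>P. (Re (a p) * Re (a q) + Im (a p) * Im (a q)) * (f p t * f q t))"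
      by (simp add: power2_eq_square sum_product algebra_simps sum.distrib)
    finally show ?thesis .
  qed
  have "(LINT t|M. (cmod (\<Sum>p\<in>P. a p * complex_of_real (f p t)))\<^sup>2)
     = (LINT t|M. (\<Sum>p\<in>P. \<Sum>q\<in>P. (Re (a p) * Re (a q) + Im (a p) * Im (a q)) * (f p t * f q t)))"
    by (simp only: pw)
  also have "\<dots> = (\<Sum>p\<in>P. \<Sum>q\<in>P. (Re (a p) * Re (a q) + Im (a p) * Im (a q)) * H p q)"
    unfolding H_def
  proof (subst Bochner_Integration.integral_sum)
    show "\<And>p. p \<in> P \<Longrightarrow> integrable M (\<lambda>x. \<Sum>q\<in>P. (Re (a p) * Re (a q) + Im (a p) * Im (a q)) * (f p x * f q x))"
      by (intro Bochner_Integration.integrable_sum integrable_mult_right int)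
    show "(\<Sum>p\<in>P. LINT x|M. (\<Sum>q\<in>P. (Re (a p) * Re (a q) + Im (a p) * Im (a q)) * (f p x * f q x))) =
      (\<Sum>p\<in>P. \<Sum>q\<in>P. (Re (a p) * Re (a q) + Im (a p) * Im (a q)) * (LINT t|M. f p t * f q t))"
    proof (rule sum.cong[OF refl])
      fix p assume p: "p \<in> P"
      show "(LINT x|M. (\<Sum>q\<in>P. (Re (a p) * Re (a q) + Im (a p) * Im (a q)) * (f p x * f q x))) =
        (\<Sum>q\<in>P. (Re (a p) * Re (a q) + Im (a p) * Im (a q)) * (LINT t|M. f p t * f q t))"
        by (subst Bochner_Integration.integral_sum) (auto intro!: integrable_mult_right int p)
    qed
  qed
  finally have R: "(LINT t|M. (cmod (\<Sum>p\<in>P. a p * complex_of_real (f p t)))\<^sup>2)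
     = (\<Sum>p\<in>P. \<Sum>q\<in>P. (Re (a p) * Re (a q) + Im (a p) * Im (a q)) * H p q)" .
  have ImS: "(\<Sum>p\<in>P. \<Sum>q\<in>P. (Im (a p) * Re (a q) - Re (a p) * Im (a q)) * H p q) = 0"
  proof -
    have "(\<Sum>p\<in>P. \<Sum>q\<in>P. (Im (a p) * Re (a q) - Re (a p) * Im (a q)) * H p q)
       = (\<Sum>q\<in>P. \<Sum>p\<in>P. (Im (a p) * Re (a q) - Re (a p) * Im (a q)) * H p q)"
      by (rule sum.swap)
    also have "\<dots> = - (\<Sum>q\<in>P. \<Sum>p\<in>P. (Im (a q) * Re (a p) - Re (a q) * Im (a p)) * H q p)"
      by (simp add: Hsym sum_negf[symmetric] algebra_simps)
    finally show ?thesis by simp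
  qed
  show ?thesis unfolding R H_def[symmetric]
  proof (rule complex_eqI)
    show "Re (\<Sum>p\<in>P. \<Sum>q\<in>P. a p * cnj (a q) * complex_of_real (H p q)) =
      Re (complex_of_real (\<Sum>p\<in>P. \<Sum>q\<in>P. (Re (a p) * Re (a q) + Im (a p) * Im (a q)) * H p q))"
      by (simp add: Re_sum algebra_simps)
    show "Im (\<Sum>p\<in>P. \<Sum>q\<in>P. a p * cnj (a q) * complex_of_real (H p q)) =
      Im (complex_of_real (\<Sum>p\<in>P. \<Sum>q\<in>P. (Re (a p) * Re (a q) + Im (a p) * Im (a q)) * H p q))"
      using ImS by (simp add: Im_sum algebra_simps)
  qed
qed


lemma sum_prod_nested: "(\<Sum>q\<in>A\<times>B. h q) = (\<Sum>j\<in>A. \<Sum>l\<in>B. h (j,l))"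
  by (simp add: sum.cartesian_product)

lemma ind_sq: "(indicator A t :: real)\<^sup>2 = indicator A t"
  by (simp add: indicator_def)

context wave begin

definition fk :: "nat \<times> nat \<Rightarrow> real \<Rightarrow> real" where
  "fk p t = indicator {0..<Ts} t * Scomp s \<tau> (fst p) (t + real (snd p) * Ts)"

lemma fk_prod: "fk p t * fk q t = indicator {0..<Ts} t *
   (Scomp s \<tau> (fst p) (t + real (snd p) * Ts) * Scomp s \<tau> (fst q) (t + real (snd q) * Ts))"
  unfolding fk_def by (simp add: indicator_def)

lemma fk_int: "integrable lborel (\<lambda>t. fk p t * fk q t)"
  unfolding fk_prod
  using integrable_mult_indicator[of "{0..<Ts}" lborel, OF _ Sprod_int] by simp

lemma Hn_fk: "Hn s Ts \<tau> i j k l = (LINT t|lborel. fk (i,k) t * fk (j,l) t)"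
  unfolding fk_prod Hn_def set_lebesgue_integral_def by simp

lemma term_eq: "c i * cnj (c j) * (complex_of_real h * cis ((real l - real k) * \<omega>))
   = (c i * cis (- (real k * \<omega>))) * cnj (c j * cis (- (real l * \<omega>))) * complex_of_real h"
proof -
  have "cis ((real l - real k) * \<omega>) = cis (- (real k * \<omega>)) * cis (real l * \<omega>)"
    by (simp add: cis_mult algebra_simps)
  then show ?thesis by (simp add: cis_cnj algebra_simps)
qed

lemma Qform_raw: fixes c :: "nat \<Rightarrow> complex" shows "(\<Sum>i<2. \<Sum>j<2. c i * cnj (c j) * Tmat s Ts \<tau> \<omega> i j) =
   complex_of_real (LINT t|lborel. (cmod (\<Sum>p\<in>{..<2}\<times>{..<3}. (c (fst p) * cis (- (real (snd p) * \<omega>))) * complex_of_real (fk p t)))\<^sup>2)"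
proof -
  define a where "a p = c (fst p) * cis (- (real (snd p) * \<omega>))" for p
  define P where "P = {..<2::nat} \<times> {..<3::nat}"
  have "(\<Sum>i<2. \<Sum>j<2. c i * cnj (c j) * Tmat s Ts \<tau> \<omega> i j)
     = (\<Sum>i<2. \<Sum>j<2. \<Sum>k<3. \<Sum>l<3. a (i,k) * cnj (a (j,l)) * complex_of_real (Hn s Ts \<tau> i j k l))"
    unfolding Tmat_eq a_def by (simp add: sum_distrib_left term_eq)
  also have "\<dots> = (\<Sum>i<2. \<Sum>k<3. \<Sum>j<2. \<Sum>l<3. a (i,k) * cnj (a (j,l)) * complex_of_real (Hn s Ts \<tau> i j k l))"
    by (rule sum.cong[OF refl], rule sum.swap)
  also have "\<dots> = (\<Sum>p\<in>P. \<Sum>q\<in>P. a p * cnj (a q) * complex_of_real (LINT t|lborel. fk p t * fk q t))"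
    unfolding P_def Hn_fk sum_prod_nested ..
  also have "\<dots> = complex_of_real (LINT t|lborel. (cmod (\<Sum>p\<in>P. a p * complex_of_real (fk p t)))\<^sup>2)"
    by (rule psd_gram) (auto simp: P_def intro: fk_int)
  finally show ?thesis unfolding a_def P_def .
qed

lemma sum_fk: fixes c :: "nat \<Rightarrow> complex" shows "(\<Sum>p\<in>{..<2}\<times>{..<3}. (c (fst p) * cis (- (real (snd p) * \<omega>))) * complex_of_real (fk p t))
   = complex_of_real (indicator {0..<Ts} t) * (c 0 * Fw s Ts 2 0 t (-\<omega>) + c 1 * Fw s Ts 2 \<tau> t (-\<omega>))"
  unfolding fk_def Fw_def Scomp_def
  by (simp add: numeral_3_eq_3 numeral_2_eq_2 lessThan_Suc atLeast0_atMost_Suc algebra_simps)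

lemma Qform: fixes c :: "nat \<Rightarrow> complex" shows "(\<Sum>i<2. \<Sum>j<2. c i * cnj (c j) * Tmat s Ts \<tau> \<omega> i j) =
   complex_of_real (LINT t|lborel. indicator {0..<Ts} t * (cmod (c 0 * Fw s Ts 2 0 t (-\<omega>) + c 1 * Fw s Ts 2 \<tau> t (-\<omega>)))\<^sup>2)"
  unfolding Qform_raw sum_fk by (simp add: norm_mult power_mult_distrib ind_sq)

lemma Qform_int: fixes c :: "nat \<Rightarrow> complex" shows "integrable lborel (\<lambda>t. indicator {0..<Ts} t * (cmod (c 0 * Fw s Ts 2 0 t (-\<omega>) + c 1 * Fw s Ts 2 \<tau> t (-\<omega>)))\<^sup>2)"
proof -
  have "integrable lborel (\<lambda>t. (cmod (\<Sum>p\<in>{..<2}\<times>{..<3}. (c (fst p) * cis (- (real (snd p) * \<omega>))) * complex_of_real (fk p t)))\<^sup>2)"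
    by (rule psd_gram_int) (auto intro: fk_int)
  then show ?thesis unfolding sum_fk by (simp add: norm_mult power_mult_distrib ind_sq)
qed

end


context wave begin

lemma lt3: "{..<3::nat} = {0,1,2}" by auto

lemma Hn_sym: "Hn s Ts \<tau> i j k l = Hn s Ts \<tau> j i l k"
  unfolding Hn_def by (simp add: mult.commute)

lemma Tmat_herm: "cnj (Tmat s Ts \<tau> \<omega> i j) = Tmat s Ts \<tau> \<omega> j i"
proof -
  have "cnj (Tmat s Ts \<tau> \<omega> i j) = (\<Sum>k<3. \<Sum>l<3. complex_of_real (Hn s Ts \<tau> i j k l) * cis ((real k - real l) * \<omega>))"
    unfolding Tmat_eq cnj_sum by (simp add: cis_cnj algebra_simps)
  also have "\<dots> = (\<Sum>l<3. \<Sum>k<3. complex_of_real (Hn s Ts \<tau> i j k l) * cis ((real k - real l) * \<omega>))"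
    by (rule sum.swap)
  also have "\<dots> = Tmat s Ts \<tau> \<omega> j i"
    unfolding Tmat_eq by (simp add: Hn_sym)
  finally show ?thesis .
qed

lemma Tmat_real: "Im (Tmat s Ts \<tau> \<omega> i i) = 0"
  using Tmat_herm[of \<omega> i i] by (metis Reals_cnj_iff complex_is_Real_iff)

lemma Qform2: fixes c :: "nat \<Rightarrow> complex" shows
  "c 0 * cnj (c 0) * Tmat s Ts \<tau> \<omega> 0 0 + c 0 * cnj (c 1) * Tmat s Ts \<tau> \<omega> 0 1
   + c 1 * cnj (c 0) * Tmat s Ts \<tau> \<omega> 1 0 + c 1 * cnj (c 1) * Tmat s Ts \<tau> \<omega> 1 1 =
   complex_of_real (LINT t|lborel. indicator {0..<Ts} t * (cmod (c 0 * Fw s Ts 2 0 t (-\<omega>) + c 1 * Fw s Ts 2 \<tau> t (-\<omega>)))\<^sup>2)"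
  using Qform[of c \<omega>] by (simp add: numeral_2_eq_2 lessThan_Suc add_ac)

lemma Hn_02: "Hn s Ts \<tau> 0 0 0 2 = 0"
proof -
  have "AE t in lborel. indicator {0..<Ts} t * (Scomp s \<tau> 0 (t + real 0 * Ts) * Scomp s \<tau> 0 (t + real 2 * Ts)) = (0::real)"
    using AE_lborel_singleton[of 0]
  proof eventually_elim
    case (elim t)
    show ?case
    proof (cases "t \<in> {0..<Ts}")
      case True
      then have "t > 0" using elim by auto
      then have "s (t + 2 * Ts) = 0" using supp[of "t + 2 * Ts"] by auto
      then show ?thesis by (simp add: Scomp_def)
    qed simp
  qed
  then show ?thesis
    unfolding Hn_def set_lebesgue_integral_def real_scaleR_def
    by (rule integral_eq_zero_AE)
qed

lemma Hn_20: "Hn s Ts \<tau> 0 0 2 0 = 0"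
  using Hn_02 Hn_sym by metis

end

locale wave2 = wave +
  assumes lin: "lin_indep_cond s Ts \<tau> 2"
    and norm1: "(LINT t|lborel. (s t)\<^sup>2) = 1"
begin

lemma alpha1: "Hn s Ts \<tau> 0 0 0 0 + Hn s Ts \<tau> 0 0 1 1 + Hn s Ts \<tau> 0 0 2 2 = 1"
proof -
  have "(LINT t|lborel. (s t)\<^sup>2) = (\<Sum>k<3. LINT t:{0..<Ts}|lborel. (s (t + real k * Ts))\<^sup>2)"
  proof (rule split3[OF sq])
    fix u assume "u \<notin> {0..<3 * Ts}"
    then have "u \<notin> {0..2*Ts}" using Ts by auto
    then show "(s u)\<^sup>2 = 0" using supp by simp
  qed
  then show ?thesis unfolding norm1 Hn_def Scomp_def
    by (simp add: lt3 power2_eq_square)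
qed

lemma T00_formula: "Re (Tmat s Ts \<tau> \<omega> 0 0) = 1 +
   (Hn s Ts \<tau> 0 0 0 1 + Hn s Ts \<tau> 0 0 1 0 + Hn s Ts \<tau> 0 0 1 2 + Hn s Ts \<tau> 0 0 2 1) * cos \<omega>"
  unfolding Tmat_eq using alpha1
  by (simp add: lt3 Re_sum Hn_02 Hn_20 algebra_simps)

lemma Qpos:
  fixes c :: "nat \<Rightarrow> complex"
  assumes w: "\<omega> \<in> {-pi..pi}" and c: "c 0 \<noteq> 0 \<or> c 1 \<noteq> 0"
  shows "(LINT t|lborel. indicator {0..<Ts} t * (cmod (c 0 * Fw s Ts 2 0 t (-\<omega>) + c 1 * Fw s Ts 2 \<tau> t (-\<omega>)))\<^sup>2) > 0"
    (is "integral\<^sup>L lborel ?f > 0")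
proof -
  have nn: "AE t in lborel. 0 \<le> ?f t" by (simp add: indicator_def)
  have ge: "integral\<^sup>L lborel ?f \<ge> 0" by (rule integral_nonneg_AE[OF nn])
  show ?thesis
  proof (rule ccontr)
    assume "\<not> integral\<^sup>L lborel ?f > 0"
    then have "integral\<^sup>L lborel ?f = 0" using ge by linarith
    then have "AE t in lborel. ?f t = 0"
      using integral_nonneg_eq_0_iff_AE[OF Qform_int nn] by simp
    then have "AE t in lborel. t \<in> {0..Ts} \<longrightarrow> c 0 * Fw s Ts 2 0 t (-\<omega>) + c 1 * Fw s Ts 2 \<tau> t (-\<omega>) = 0"
      using AE_lborel_singleton[of Ts]
      by eventually_elim (auto simp: indicator_def)
    moreover have "- \<omega> \<in> {-pi..pi}" using w by auto
    ultimately show False using lin c unfolding lin_indep_cond_def by blast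
  qed
qed

lemma T00_pos: "\<omega> \<in> {-pi..pi} \<Longrightarrow> Re (Tmat s Ts \<tau> \<omega> 0 0) > 0"
  using Qform2[of "\<lambda>i. if i = 0 then 1 else 0" \<omega>] Qpos[of \<omega> "\<lambda>i. if i = 0 then 1 else 0"]
  by simp

definition beta where
  "beta = Hn s Ts \<tau> 0 0 0 1 + Hn s Ts \<tau> 0 0 1 0 + Hn s Ts \<tau> 0 0 1 2 + Hn s Ts \<tau> 0 0 2 1"

lemma beta_lt: "\<bar>beta\<bar> < 1"
  using T00_pos[of 0] T00_pos[of pi] T00_formula[of 0] T00_formula[of pi]
  unfolding beta_def[symmetric] by auto

definition cT where "cT = 1 - \<bar>beta\<bar>"

lemma cT: "0 < cT" "cT \<le> 1"
  using beta_lt by (auto simp: cT_def)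

lemma T00_bounds: "cT \<le> Re (Tmat s Ts \<tau> \<omega> 0 0)" "Re (Tmat s Ts \<tau> \<omega> 0 0) \<le> 2"
proof -
  have "\<bar>beta * cos \<omega>\<bar> \<le> \<bar>beta\<bar>"
    by (simp add: abs_mult mult_left_le)
  then show "cT \<le> Re (Tmat s Ts \<tau> \<omega> 0 0)" "Re (Tmat s Ts \<tau> \<omega> 0 0) \<le> 2"
    using T00_formula[of \<omega>] beta_lt unfolding beta_def[symmetric] cT_def by auto
qed

lemma det_nonneg: "Re (detT s Ts \<tau> \<omega>) \<ge> 0"
proof -
  define a where "a = Re (Tmat s Ts \<tau> \<omega> 0 0)"
  define d where "d = Re (Tmat s Ts \<tau> \<omega> 1 1)"
  define b where "b = Tmat s Ts \<tau> \<omega> 0 1"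
  have T00: "Tmat s Ts \<tau> \<omega> 0 0 = complex_of_real a"
    using Tmat_real[of \<omega> 0] unfolding a_def by (simp add: complex_eq_iff)
  have T11: "Tmat s Ts \<tau> \<omega> 1 1 = complex_of_real d"
    using Tmat_real[of \<omega> 1] unfolding d_def by (simp add: complex_eq_iff)
  have T10: "Tmat s Ts \<tau> \<omega> 1 0 = cnj b"
    using Tmat_herm[of \<omega> 0 1] unfolding b_def by simp
  have apos: "a > 0" using T00_bounds[of \<omega>] cT unfolding a_def by linarith
  define c :: "nat \<Rightarrow> complex" where "c i = (if i = 0 then - cnj b else complex_of_real a)" for i
  have Q: "c 0 * cnj (c 0) * Tmat s Ts \<tau> \<omega> 0 0 + c 0 * cnj (c 1) * Tmat s Ts \<tau> \<omega> 0 1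
   + c 1 * cnj (c 0) * Tmat s Ts \<tau> \<omega> 1 0 + c 1 * cnj (c 1) * Tmat s Ts \<tau> \<omega> 1 1
   = complex_of_real (a * (a * d - (cmod b)\<^sup>2))"
    unfolding c_def T00 T11 T10 b_def[symmetric]
    by (simp add: complex_eq_iff cmod_power2[unfolded power2_eq_square] algebra_simps power2_eq_square)
  have D: "Re (detT s Ts \<tau> \<omega>) = a * d - (cmod b)\<^sup>2"
    unfolding detT_def T00 T11 T10 b_def[symmetric]
    by (simp add: cmod_power2[unfolded power2_eq_square] power2_eq_square)
  have I: "(LINT t|lborel. indicator {0..<Ts} t * (cmod (c 0 * Fw s Ts 2 0 t (-\<omega>) + c 1 * Fw s Ts 2 \<tau> t (-\<omega>)))\<^sup>2) \<ge> 0"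
    by (rule integral_nonneg_AE) (simp add: indicator_def)
  have "a * (a * d - (cmod b)\<^sup>2) = (LINT t|lborel. indicator {0..<Ts} t * (cmod (c 0 * Fw s Ts 2 0 t (-\<omega>) + c 1 * Fw s Ts 2 \<tau> t (-\<omega>)))\<^sup>2)"
    using Qform2[of c \<omega>] unfolding Q of_real_eq_iff .
  then have "a * Re (detT s Ts \<tau> \<omega>) \<ge> 0" using I D by simp
  then show ?thesis using apos by (simp add: zero_le_mult_iff)
qed

lemma Tmat_cont: "continuous_on UNIV (\<lambda>\<omega>. Tmat s Ts \<tau> \<omega> i j)"
  unfolding Tmat_eq by (intro continuous_intros)

lemma T00_cont: "continuous_on UNIV (\<lambda>\<omega>. Re (Tmat s Ts \<tau> \<omega> 0 0))"
  by (intro continuous_intros Tmat_cont)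

lemma det_cont: "continuous_on UNIV (\<lambda>\<omega>. Re (detT s Ts \<tau> \<omega>))"
  unfolding detT_def by (intro continuous_intros Tmat_cont)

end


lemma set_int_cont:
  fixes g :: "real \<Rightarrow> real"
  assumes "continuous_on {-pi..pi} g"
  shows "set_integrable lborel {-pi..pi} g"
  unfolding set_integrable_def using borel_integrable_compact[OF compact_Icc assms] .

lemma set_int_const_pi: "(\<integral>x\<in>{-pi..pi}. (c::real) \<partial>lborel) = 2 * pi * c"
  by (subst set_integral_const) (auto simp: measure_def)

lemma set_int_bounds:
  fixes g :: "real \<Rightarrow> real"
  assumes "continuous_on {-pi..pi} g"
  shows "(\<And>x. x \<in> {-pi..pi} \<Longrightarrow> g x \<le> u) \<Longrightarrow> 1 / (2 * pi) * (\<integral>x\<in>{-pi..pi}. g x \<partial>lborel) \<le> u"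
    and "(\<And>x. x \<in> {-pi..pi} \<Longrightarrow> l \<le> g x) \<Longrightarrow> l \<le> 1 / (2 * pi) * (\<integral>x\<in>{-pi..pi}. g x \<partial>lborel)"
proof -
  have ci: "set_integrable lborel {-pi..pi} (\<lambda>x. c)" for c :: real
    by (rule set_int_cont) (intro continuous_intros)
  have gi: "set_integrable lborel {-pi..pi} g" by (rule set_int_cont[OF assms])
  show "1 / (2 * pi) * (\<integral>x\<in>{-pi..pi}. g x \<partial>lborel) \<le> u" if "\<And>x. x \<in> {-pi..pi} \<Longrightarrow> g x \<le> u"
  proof -
    have "(\<integral>x\<in>{-pi..pi}. g x \<partial>lborel) \<le> (\<integral>x\<in>{-pi..pi}. u \<partial>lborel)"
      by (rule set_integral_mono[OF gi ci]) (use that in auto)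
    then show ?thesis unfolding set_int_const_pi by (simp add: field_simps)
  qed
  show "l \<le> 1 / (2 * pi) * (\<integral>x\<in>{-pi..pi}. g x \<partial>lborel)" if "\<And>x. x \<in> {-pi..pi} \<Longrightarrow> l \<le> g x"
  proof -
    have "(\<integral>x\<in>{-pi..pi}. l \<partial>lborel) \<le> (\<integral>x\<in>{-pi..pi}. g x \<partial>lborel)"
      by (rule set_integral_mono[OF ci gi]) (use that in auto)
    then show ?thesis unfolding set_int_const_pi by (simp add: field_simps)
  qed
qed

context wave2 begin

definition "TT \<omega> = Re (Tmat s Ts \<tau> \<omega> 0 0)"
definition "DD \<omega> = Re (detT s Ts \<tau> \<omega>)"

lemma TT_c: "continuous_on A TT"
  unfolding TT_def using continuous_on_subset[OF T00_cont] by blast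
lemma DD_c: "continuous_on A DD"
  unfolding DD_def using continuous_on_subset[OF det_cont] by blast
lemma TTb: "cT \<le> TT \<omega>" "TT \<omega> \<le> 2" unfolding TT_def using T00_bounds by auto
lemma DDb: "DD \<omega> \<ge> 0" unfolding DD_def using det_nonneg by auto

lemma log_cont: "continuous_on A g \<Longrightarrow> (\<And>x. 0 < g x) \<Longrightarrow> continuous_on A (\<lambda>x. log 2 (g x))"
proof -
  assume a: "continuous_on A g" "\<And>x. 0 < g x"
  have "\<forall>x\<in>A. g x \<noteq> 0" using a(2) by (metis less_irrefl)
  then show ?thesis by (intro continuous_on_log[OF continuous_on_const a(1)]) auto
qed

lemma TT_meas[measurable]: "(\<lambda>\<omega>. Re (Tmat s Ts \<tau> \<omega> 0 0)) \<in> borel_measurable borel"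
  by (rule borel_measurable_continuous_onI[OF T00_cont])

lemma DD_meas[measurable]: "(\<lambda>\<omega>. Re (detT s Ts \<tau> \<omega>)) \<in> borel_measurable borel"
  by (rule borel_measurable_continuous_onI[OF det_cont])

lemma TT_pos: "TT \<omega> > 0" using TTb(1)[of \<omega>] cT by linarith

lemma pos_aux: "\<rho> \<ge> 0 \<Longrightarrow> y \<ge> 0 \<Longrightarrow> 0 < 1 + \<rho> * y * TT \<omega>"
proof -
  assume "\<rho> \<ge> 0" "y \<ge> 0"
  then have "0 \<le> \<rho> * y * TT \<omega>" using TT_pos[of \<omega>] by simp
  then show ?thesis by linarith
qed

lemma pos_auxc: "\<rho> \<ge> 0 \<Longrightarrow> y \<ge> 0 \<Longrightarrow> 0 < 1 + \<rho> * y * cT"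
proof -
  assume "\<rho> \<ge> 0" "y \<ge> 0"
  then have "0 \<le> \<rho> * y * cT" using cT by simp
  then show ?thesis by linarith
qed

lemma ESD_cont: "\<rho> \<ge> 0 \<Longrightarrow> continuous_on A (\<lambda>\<omega>. log 2 (1 + \<rho> * x\<^sup>2 * TT \<omega>))"
proof -
  assume r: "\<rho> \<ge> 0"
  have "continuous_on A (\<lambda>\<omega>. 1 + \<rho> * x\<^sup>2 * TT \<omega>)"
    by (intro continuous_intros TT_c)
  moreover have "\<And>\<omega>. 1 + \<rho> * x\<^sup>2 * TT \<omega> > 0"
    using pos_aux r by simp
  ultimately show ?thesis by (rule log_cont)
qed

lemma ESD_upper: "\<rho> \<ge> 0 \<Longrightarrow> I_ESD s Ts \<tau> \<rho> a \<le> log 2 (1 + \<rho> * (cmod a)\<^sup>2 * 2)"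
  unfolding I_ESD_def TT_def[symmetric]
proof (rule set_int_bounds(1)[OF ESD_cont])
  fix \<omega> assume r: "\<rho> \<ge> 0"
  have "\<rho> * (cmod a)\<^sup>2 * TT \<omega> \<le> \<rho> * (cmod a)\<^sup>2 * 2"
    using TTb(2)[of \<omega>] r by (intro mult_left_mono) auto
  moreover have "0 < 1 + \<rho> * (cmod a)\<^sup>2 * TT \<omega>" using pos_aux r by simp
  ultimately show "log 2 (1 + \<rho> * (cmod a)\<^sup>2 * TT \<omega>) \<le> log 2 (1 + \<rho> * (cmod a)\<^sup>2 * 2)"
    by simp
qed

lemma ESD_lower: "\<rho> \<ge> 0 \<Longrightarrow> log 2 (1 + \<rho> * (cmod a)\<^sup>2 * cT) \<le> I_ESD s Ts \<tau> \<rho> a"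
  unfolding I_ESD_def TT_def[symmetric]
proof (rule set_int_bounds(2)[OF ESD_cont])
  fix \<omega> assume r: "\<rho> \<ge> 0"
  have "\<rho> * (cmod a)\<^sup>2 * cT \<le> \<rho> * (cmod a)\<^sup>2 * TT \<omega>"
    using TTb(1)[of \<omega>] r by (intro mult_left_mono) auto
  moreover have "0 < 1 + \<rho> * (cmod a)\<^sup>2 * cT" using pos_auxc r by simp
  ultimately show "log 2 (1 + \<rho> * (cmod a)\<^sup>2 * cT) \<le> log 2 (1 + \<rho> * (cmod a)\<^sup>2 * TT \<omega>)"
    by simp
qed

lemma MacA_arg: assumes r: "\<rho> \<ge> 0" and that: "x1 \<ge> 0" "x2 \<ge> 0"
  shows "1 + \<rho> * x1 * cT \<le> 1 + \<rho> * (x1 + x2) * TT \<omega> + \<rho>\<^sup>2 * x1 * x2 * DD \<omega>"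
proof -
  have "\<rho> * x1 * cT \<le> \<rho> * x1 * TT \<omega>"
    using TTb(1)[of \<omega>] r that by (intro mult_left_mono) auto
  moreover have "0 \<le> \<rho> * x2 * TT \<omega>" using r that TT_pos[of \<omega>] by simp
  moreover have "0 \<le> \<rho>\<^sup>2 * x1 * x2 * DD \<omega>" using r that DDb[of \<omega>] by simp
  ultimately show ?thesis by (simp add: algebra_simps)
qed

lemma MacA_cont: "\<rho> \<ge> 0 \<Longrightarrow> continuous_on A (\<lambda>\<omega>. log 2 (1 + \<rho> * ((cmod a1)\<^sup>2 + (cmod a2)\<^sup>2) * TT \<omega>
        + \<rho>\<^sup>2 * (cmod a1)\<^sup>2 * (cmod a2)\<^sup>2 * DD \<omega>))"
proof -
  assume r: "\<rho> \<ge> 0"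
  have "continuous_on A (\<lambda>\<omega>. 1 + \<rho> * ((cmod a1)\<^sup>2 + (cmod a2)\<^sup>2) * TT \<omega>
        + \<rho>\<^sup>2 * (cmod a1)\<^sup>2 * (cmod a2)\<^sup>2 * DD \<omega>)"
    by (intro continuous_intros TT_c DD_c)
  moreover have "\<And>\<omega>. 1 + \<rho> * ((cmod a1)\<^sup>2 + (cmod a2)\<^sup>2) * TT \<omega> + \<rho>\<^sup>2 * (cmod a1)\<^sup>2 * (cmod a2)\<^sup>2 * DD \<omega> > 0"
    using MacA_arg[OF r, of "(cmod a1)\<^sup>2" "(cmod a2)\<^sup>2"] pos_auxc[OF r, of "(cmod a1)\<^sup>2"]
    by (meson less_le_trans zero_le_power2)
  ultimately show ?thesis by (rule log_cont)
qed

lemma MacA_lower1: "\<rho> \<ge> 0 \<Longrightarrow> log 2 (1 + \<rho> * (cmod a1)\<^sup>2 * cT) \<le> I_EMacA s Ts \<tau> \<rho> a1 a2"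
  unfolding I_EMacA_def TT_def[symmetric] DD_def[symmetric]
proof (rule set_int_bounds(2)[OF MacA_cont])
  fix \<omega> assume r: "\<rho> \<ge> 0"
  have "1 + \<rho> * (cmod a1)\<^sup>2 * cT \<le> 1 + \<rho> * ((cmod a1)\<^sup>2 + (cmod a2)\<^sup>2) * TT \<omega> + \<rho>\<^sup>2 * (cmod a1)\<^sup>2 * (cmod a2)\<^sup>2 * DD \<omega>"
    by (rule MacA_arg[OF r]) auto
  moreover have "0 < 1 + \<rho> * (cmod a1)\<^sup>2 * cT" using pos_auxc r by simp
  ultimately show "log 2 (1 + \<rho> * (cmod a1)\<^sup>2 * cT) \<le> log 2 (1 + \<rho> * ((cmod a1)\<^sup>2 + (cmod a2)\<^sup>2) * TT \<omega> + \<rho>\<^sup>2 * (cmod a1)\<^sup>2 * (cmod a2)\<^sup>2 * DD \<omega>)"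
    by simp
qed

lemma MacA_lower2: "\<rho> \<ge> 0 \<Longrightarrow> log 2 (1 + \<rho> * (cmod a2)\<^sup>2 * cT) \<le> I_EMacA s Ts \<tau> \<rho> a1 a2"
proof -
  assume r: "\<rho> \<ge> 0"
  have "I_EMacA s Ts \<tau> \<rho> a1 a2 = I_EMacA s Ts \<tau> \<rho> a2 a1"
    unfolding I_EMacA_def by (simp add: algebra_simps)
  then show ?thesis using MacA_lower1[OF r, of a2 a1] by simp
qed

end


context wave2 begin
lemma ESD_meas[measurable]: "(\<lambda>g. I_ESD s Ts \<tau> \<rho> (f g)) \<in> borel_measurable M"
  if [measurable]: "f \<in> borel_measurable M"
  unfolding I_ESD_def set_lebesgue_integral_def
  by measurable

lemma MacA_meas[measurable]: "(\<lambda>g. I_EMacA s Ts \<tau> \<rho> (f g) (h g)) \<in> borel_measurable M"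
  if [measurable]: "f \<in> borel_measurable M" "h \<in> borel_measurable M"
  unfolding I_EMacA_def set_lebesgue_integral_def
  by measurable
end


lemma cgauss_sets[simp, measurable_cong]: "sets (cgauss v) = sets borel"
  unfolding cgauss_def by simp

lemma cgauss_space[simp]: "space (cgauss v) = UNIV"
  unfolding cgauss_def by simp

lemma emeasure_cgauss: "A \<in> sets borel \<Longrightarrow>
  emeasure (cgauss v) A = (\<integral>\<^sup>+ z. ennreal (exp (- (cmod z)\<^sup>2 / v) / (pi * v)) * indicator A z \<partial>lborel)"
  unfolding cgauss_def by (subst emeasure_density) auto

lemma gamma2: "Gamma (2::real) = 1" using Gamma_fact[of 1] by simp

lemma ball_vol: "r \<ge> 0 \<Longrightarrow> emeasure lborel (ball (0::complex) r) = ennreal (pi * r\<^sup>2)"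
  by (simp add: emeasure_ball unit_ball_vol_def gamma2)

lemma cgauss_ball_upper:
  assumes v: "v > 0" and r: "r \<ge> 0"
  shows "emeasure (cgauss v) (ball 0 r) \<le> ennreal (r\<^sup>2 / v)"
proof -
  have "emeasure (cgauss v) (ball 0 r) \<le> (\<integral>\<^sup>+ z. ennreal (1 / (pi * v)) * indicator (ball (0::complex) r) z \<partial>lborel)"
    unfolding emeasure_cgauss[OF borel_open[OF open_ball]]
  proof (rule nn_integral_mono)
    fix z :: complex
    have "exp (- (cmod z)\<^sup>2 / v) \<le> 1" using v by simp
    then have "exp (- (cmod z)\<^sup>2 / v) / (pi * v) \<le> 1 / (pi * v)"
      using v by (intro divide_right_mono) auto
    then show "ennreal (exp (- (cmod z)\<^sup>2 / v) / (pi * v)) * indicator (ball 0 r) z \<le> ennreal (1 / (pi * v)) * indicator (ball 0 r) z"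
      by (intro mult_right_mono ennreal_leI) auto
  qed
  also have "\<dots> = ennreal (1 / (pi * v)) * ennreal (pi * r\<^sup>2)"
    by (subst nn_integral_cmult_indicator) (auto simp: ball_vol[OF r])
  also have "\<dots> = ennreal (r\<^sup>2 / v)"
    using v by (subst ennreal_mult[symmetric]) (auto simp: field_simps)
  finally show ?thesis .
qed

lemma cgauss_ball_lower:
  assumes v: "v > 0" and r: "r \<ge> 0" "r\<^sup>2 \<le> v"
  shows "ennreal (exp (-1) * r\<^sup>2 / v) \<le> emeasure (cgauss v) (ball 0 r)"
proof -
  have "ennreal (exp (-1) * r\<^sup>2 / v) = ennreal (exp (-1) / (pi * v)) * ennreal (pi * r\<^sup>2)"
    using v by (subst ennreal_mult[symmetric]) (auto simp: field_simps)
  also have "\<dots> = (\<integral>\<^sup>+ z. ennreal (exp (-1) / (pi * v)) * indicator (ball (0::complex) r) z \<partial>lborel)"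
    by (subst nn_integral_cmult_indicator) (auto simp: ball_vol[OF r(1)])
  also have "\<dots> \<le> emeasure (cgauss v) (ball 0 r)"
    unfolding emeasure_cgauss[OF borel_open[OF open_ball]]
  proof (intro nn_integral_mono)
    fix z :: complex
    show "ennreal (exp (-1) / (pi * v)) * indicator (ball 0 r) z \<le> ennreal (exp (- (cmod z)\<^sup>2 / v) / (pi * v)) * indicator (ball 0 r) z"
    proof (cases "z \<in> ball 0 r")
      case True
      then have "cmod z \<le> r" by auto
      then have "(cmod z)\<^sup>2 \<le> r\<^sup>2" by (simp add: power_mono)
      then have "(cmod z)\<^sup>2 \<le> v" using r by linarith
      then have "(cmod z)\<^sup>2 / v \<le> 1" using v by simp
      then have "exp (-1) \<le> exp (- (cmod z)\<^sup>2 / v)" by simp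
      then have "exp (-1) / (pi * v) \<le> exp (- (cmod z)\<^sup>2 / v) / (pi * v)"
        using v by (intro divide_right_mono) auto
      then show ?thesis using True by (simp add: ennreal_leI)
    qed simp
  qed
  finally show ?thesis .
qed

lemma exp_sq_bound: fixes y :: real shows "y \<ge> 0 \<Longrightarrow> y\<^sup>2 / 4 \<le> exp y"
proof -
  assume y: "y \<ge> 0"
  have "1 + y / 2 \<le> exp (y / 2)" by (rule exp_ge_add_one_self)
  then have "(1 + y / 2)\<^sup>2 \<le> (exp (y / 2))\<^sup>2" using y by (intro power_mono) auto
  moreover have "(exp (y / 2))\<^sup>2 = exp y" by (simp add: power2_eq_square exp_add[symmetric])
  moreover have "y\<^sup>2 / 4 \<le> (1 + y / 2)\<^sup>2" using y by (simp add: power2_eq_square field_simps)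
  ultimately show ?thesis by linarith
qed

lemma gauss_summable:
  assumes v: "v > 0"
  shows "summable (\<lambda>n::nat. (real n + 1)\<^sup>2 * exp (- (real n)\<^sup>2 / v))"
proof (rule summable_comparison_test'[where N = 1])
  show "summable (\<lambda>n::nat. 16 * v\<^sup>2 * inverse (real n ^ 2))"
  proof -
    have "summable (\<lambda>n::nat. inverse (real n ^ 2))" by (rule inverse_power_summable) simp
    then show ?thesis by (rule summable_mult)
  qed
  fix n :: nat assume n: "n \<ge> 1"
  have e: "((real n)\<^sup>2 / v)\<^sup>2 / 4 \<le> exp ((real n)\<^sup>2 / v)" using v by (intro exp_sq_bound) auto
  have pos: "((real n)\<^sup>2 / v)\<^sup>2 / 4 > 0" using n v by simp
  have "exp (- (real n)\<^sup>2 / v) = inverse (exp ((real n)\<^sup>2 / v))" by (simp add: exp_minus[symmetric])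
  also have "\<dots> \<le> inverse (((real n)\<^sup>2 / v)\<^sup>2 / 4)"
    using e pos by (intro le_imp_inverse_le) auto
  also have "\<dots> = 4 * v\<^sup>2 / (real n * (real n * (real n * real n)))" using v by (simp add: field_simps power2_eq_square eval_nat_numeral)
  finally have a: "exp (- (real n)\<^sup>2 / v) \<le> 4 * v\<^sup>2 / (real n * (real n * (real n * real n)))" .
  have "real n + 1 \<le> 2 * real n" using n by simp
  then have "(real n + 1)\<^sup>2 \<le> (2 * real n)\<^sup>2" by (intro power_mono) auto
  then have b: "(real n + 1)\<^sup>2 \<le> 4 * (real n)\<^sup>2" by (simp add: power_mult_distrib)
  have "(real n + 1)\<^sup>2 * exp (- (real n)\<^sup>2 / v) \<le> 4 * (real n)\<^sup>2 * (4 * v\<^sup>2 / (real n * (real n * (real n * real n))))"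
    using a b by (intro mult_mono) auto
  also have "\<dots> = 16 * v\<^sup>2 * inverse (real n ^ 2)" using n by (simp add: field_simps power2_eq_square)
  finally show "norm ((real n + 1)\<^sup>2 * exp (- (real n)\<^sup>2 / v)) \<le> 16 * v\<^sup>2 * inverse (real n ^ 2)"
    by simp
qed

lemma cgauss_finite:
  assumes v: "v > 0"
  shows "emeasure (cgauss v) UNIV < \<infinity>"
proof -
  have ballm[measurable]: "\<And>r. ball (0::complex) r \<in> sets borel" by simp
  define c where "c n = ennreal (exp (- (real n)\<^sup>2 / v) / (pi * v))" for n :: nat
  have pw: "ennreal (exp (- (cmod z)\<^sup>2 / v) / (pi * v)) \<le> (\<Sum>n. c n * indicator (ball 0 (real n + 1)) z)" for z :: complex
  proof -
    define n where "n = nat \<lfloor>cmod z\<rfloor>"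
    have nf: "real n = of_int \<lfloor>cmod z\<rfloor>" unfolding n_def by simp
    have n1: "real n \<le> cmod z" "cmod z < real n + 1" unfolding nf by linarith+
    then have "(real n)\<^sup>2 \<le> (cmod z)\<^sup>2" by (intro power_mono) auto
    then have "exp (- (cmod z)\<^sup>2 / v) / (pi * v) \<le> exp (- (real n)\<^sup>2 / v) / (pi * v)"
      using v by (intro divide_right_mono) (auto simp: divide_right_mono)
    then have "ennreal (exp (- (cmod z)\<^sup>2 / v) / (pi * v)) \<le> c n * indicator (ball 0 (real n + 1)) z"
      using n1 unfolding c_def by (simp add: ennreal_leI)
    also have "\<dots> \<le> (\<Sum>n. c n * indicator (ball 0 (real n + 1)) z)"
      using ennreal_suminf_lessD[of "\<lambda>n. c n * indicator (ball 0 (real n + 1)) z" "c n * indicator (ball 0 (real n + 1)) z" n]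
      by (meson linorder_not_le order_less_irrefl)
    finally show ?thesis .
  qed
  have "emeasure (cgauss v) UNIV = (\<integral>\<^sup>+ z. ennreal (exp (- (cmod z)\<^sup>2 / v) / (pi * v)) \<partial>lborel)"
    using emeasure_cgauss[of UNIV v] by simp
  also have "\<dots> \<le> (\<integral>\<^sup>+ z. (\<Sum>n. c n * indicator (ball (0::complex) (real n + 1)) z) \<partial>lborel)"
    by (rule nn_integral_mono) (rule pw)
  also have "\<dots> = (\<Sum>n. \<integral>\<^sup>+ z. c n * indicator (ball (0::complex) (real n + 1)) z \<partial>lborel)"
    by (rule nn_integral_suminf) measurable
  also have "\<dots> = (\<Sum>n. ennreal ((real n + 1)\<^sup>2 * exp (- (real n)\<^sup>2 / v) / v))"
  proof (rule suminf_cong)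
    fix n
    have "(\<integral>\<^sup>+ z. c n * indicator (ball (0::complex) (real n + 1)) z \<partial>lborel) = c n * ennreal (pi * (real n + 1)\<^sup>2)"
      by (subst nn_integral_cmult_indicator) (auto simp: ball_vol[of "real n + 1"])
    also have "\<dots> = ennreal ((real n + 1)\<^sup>2 * exp (- (real n)\<^sup>2 / v) / v)"
      unfolding c_def using v by (subst ennreal_mult[symmetric]) (auto simp: field_simps)
    finally show "(\<integral>\<^sup>+ z. c n * indicator (ball (0::complex) (real n + 1)) z \<partial>lborel) = ennreal ((real n + 1)\<^sup>2 * exp (- (real n)\<^sup>2 / v) / v)" .
  qed
  also have "\<dots> < \<infinity>"
    using ennreal_suminf_neq_top[OF summable_divide[OF gauss_summable[OF v]]] v
    by (simp add: top.not_eq_extremum)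
  finally show ?thesis .
qed

lemma cgauss_finite_measure: "v > 0 \<Longrightarrow> finite_measure (cgauss v)"
  using cgauss_finite by (intro finite_measureI) (simp add: less_top[symmetric])

lemma cgauss_total_pos: "v > 0 \<Longrightarrow> measure (cgauss v) UNIV > 0"
proof -
  assume v: "v > 0"
  have "ennreal (exp (-1) * (sqrt v)\<^sup>2 / v) \<le> emeasure (cgauss v) (ball 0 (sqrt v))"
    using v by (intro cgauss_ball_lower) auto
  also have "\<dots> \<le> emeasure (cgauss v) UNIV" by (intro emeasure_mono) auto
  moreover have "0 < ennreal (exp (-1) * (sqrt v)\<^sup>2 / v)" using v by simp
  ultimately have "0 < emeasure (cgauss v) UNIV" by (meson order.strict_trans2)
  moreover have "emeasure (cgauss v) UNIV \<noteq> \<top>" using cgauss_finite[OF v] by (simp add: less_top[symmetric])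
  ultimately show ?thesis
    by (simp add: measure_def enn2real_positive_iff top.not_eq_extremum)
qed



lemma link_UNIV: "(UNIV :: link set) = {S_R1, S_R2, S_D, R1_R2, R1_D, R2_R1, R2_D}"
proof -
  have "x \<in> {S_R1, S_R2, S_D, R1_R2, R1_D, R2_R1, R2_D}" for x by (cases x) auto
  then show ?thesis by auto
qed

lemma finite_link[simp]: "finite (UNIV :: link set)"
  by (simp add: link_UNIV)

lemma cgauss_measure_upper: "v > 0 \<Longrightarrow> t \<ge> 0 \<Longrightarrow> measure (cgauss v) (ball 0 (sqrt t)) \<le> t / v"
proof -
  assume v: "v > 0" and t: "t \<ge> 0"
  have "emeasure (cgauss v) (ball 0 (sqrt t)) \<le> ennreal ((sqrt t)\<^sup>2 / v)"
    using v t by (intro cgauss_ball_upper) auto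
  then show ?thesis using t v
    by (simp add: finite_measure.emeasure_eq_measure[OF cgauss_finite_measure[OF v]] ennreal_le_iff)
qed

lemma cgauss_measure_lower: "v > 0 \<Longrightarrow> t \<ge> 0 \<Longrightarrow> t \<le> v \<Longrightarrow> exp (-1) * t / v \<le> measure (cgauss v) (ball 0 (sqrt t))"
proof -
  assume v: "v > 0" and t: "t \<ge> 0" "t \<le> v"
  have "ennreal (exp (-1) * (sqrt t)\<^sup>2 / v) \<le> emeasure (cgauss v) (ball 0 (sqrt t))"
    using v t by (intro cgauss_ball_lower) auto
  then show ?thesis using t v
    by (simp add: finite_measure.emeasure_eq_measure[OF cgauss_finite_measure[OF v]])
qed

lemma sqrt_ball_iff: "z \<in> ball 0 (sqrt t) \<longleftrightarrow> (cmod z)\<^sup>2 < t"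
proof -
  have "z \<in> ball 0 (sqrt t) \<longleftrightarrow> sqrt ((cmod z)\<^sup>2) < sqrt t" by simp
  also have "\<dots> \<longleftrightarrow> (cmod z)\<^sup>2 < t" by (rule real_sqrt_less_iff)
  finally show ?thesis .
qed

definition boxA :: "real \<Rightarrow> real \<Rightarrow> real \<Rightarrow> link \<Rightarrow> complex set" where
  "boxA t0 t1 t2 l = (if l = S_D then ball 0 (sqrt t0) else if l = S_R1 then ball 0 (sqrt t1)
      else if l = S_R2 then ball 0 (sqrt t2) else UNIV)"

lemma boxA_sets[simp]: "boxA t0 t1 t2 l \<in> sets borel"
  unfolding boxA_def by auto

lemma box_eq: "PiE UNIV (boxA t0 t1 t2) =
  {g. (cmod (g S_D))\<^sup>2 < t0 \<and> (cmod (g S_R1))\<^sup>2 < t1 \<and> (cmod (g S_R2))\<^sup>2 < t2}"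
proof -
  have "g \<in> PiE UNIV (boxA t0 t1 t2) \<longleftrightarrow> (\<forall>l. g l \<in> boxA t0 t1 t2 l)" for g
    by (simp add: PiE_def Pi_def)
  also have "\<dots> g \<longleftrightarrow> g S_D \<in> ball 0 (sqrt t0) \<and> g S_R1 \<in> ball 0 (sqrt t1) \<and> g S_R2 \<in> ball 0 (sqrt t2)" for g
  proof
    assume "\<forall>l. g l \<in> boxA t0 t1 t2 l"
    then show "g S_D \<in> ball 0 (sqrt t0) \<and> g S_R1 \<in> ball 0 (sqrt t1) \<and> g S_R2 \<in> ball 0 (sqrt t2)"
      unfolding boxA_def by (metis link.distinct)
  next
    assume a: "g S_D \<in> ball 0 (sqrt t0) \<and> g S_R1 \<in> ball 0 (sqrt t1) \<and> g S_R2 \<in> ball 0 (sqrt t2)"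
    show "\<forall>l. g l \<in> boxA t0 t1 t2 l"
    proof
      fix l show "g l \<in> boxA t0 t1 t2 l" using a unfolding boxA_def by (cases l) auto
    qed
  qed
  finally show ?thesis unfolding sqrt_ball_iff by blast
qed

locale gains =
  fixes \<sigma>2 :: "link \<Rightarrow> real"
  assumes pos: "\<And>l. \<sigma>2 l > 0"
begin

lemma PS: "product_sigma_finite (\<lambda>l. cgauss (\<sigma>2 l))"
  unfolding product_sigma_finite_def using cgauss_finite_measure[OF pos]
  unfolding finite_measure_def by auto

lemma space_gains[simp]: "space (gains_measure \<sigma>2) = UNIV"
  unfolding gains_measure_def by (simp add: space_PiM PiE_def extensional_def)

definition Lam where
  "Lam = measure (cgauss (\<sigma>2 R1_R2)) UNIV * measure (cgauss (\<sigma>2 R1_D)) UNIV *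
         measure (cgauss (\<sigma>2 R2_R1)) UNIV * measure (cgauss (\<sigma>2 R2_D)) UNIV"

lemma Lam_pos: "Lam > 0"
  unfolding Lam_def using cgauss_total_pos[OF pos] by simp

lemma box_measure: "measure (gains_measure \<sigma>2) (PiE UNIV (boxA t0 t1 t2)) =
   measure (cgauss (\<sigma>2 S_D)) (ball 0 (sqrt t0)) * measure (cgauss (\<sigma>2 S_R1)) (ball 0 (sqrt t1)) *
   measure (cgauss (\<sigma>2 S_R2)) (ball 0 (sqrt t2)) * Lam"
proof -
  have "emeasure (gains_measure \<sigma>2) (PiE UNIV (boxA t0 t1 t2)) = (\<Prod>l\<in>UNIV. emeasure (cgauss (\<sigma>2 l)) (boxA t0 t1 t2 l))"
    unfolding gains_measure_def by (rule product_sigma_finite.emeasure_PiM[OF PS]) auto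
  also have "\<dots> = (\<Prod>l\<in>UNIV. ennreal (measure (cgauss (\<sigma>2 l)) (boxA t0 t1 t2 l)))"
    by (simp add: finite_measure.emeasure_eq_measure[OF cgauss_finite_measure[OF pos]])
  also have "\<dots> = ennreal (\<Prod>l\<in>UNIV. measure (cgauss (\<sigma>2 l)) (boxA t0 t1 t2 l))"
    by (rule prod_ennreal) simp
  finally have "measure (gains_measure \<sigma>2) (PiE UNIV (boxA t0 t1 t2)) = (\<Prod>l\<in>UNIV. measure (cgauss (\<sigma>2 l)) (boxA t0 t1 t2 l))"
    unfolding measure_def by (simp add: prod_nonneg)
  also have "\<dots> = measure (cgauss (\<sigma>2 S_D)) (ball 0 (sqrt t0)) * measure (cgauss (\<sigma>2 S_R1)) (ball 0 (sqrt t1)) *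
   measure (cgauss (\<sigma>2 S_R2)) (ball 0 (sqrt t2)) * Lam"
    unfolding link_UNIV Lam_def by (simp add: boxA_def)
  finally show ?thesis .
qed

lemma box_upper: "t0 \<ge> 0 \<Longrightarrow> t1 \<ge> 0 \<Longrightarrow> t2 \<ge> 0 \<Longrightarrow>
  measure (gains_measure \<sigma>2) (PiE UNIV (boxA t0 t1 t2)) \<le> (t0 / \<sigma>2 S_D) * (t1 / \<sigma>2 S_R1) * (t2 / \<sigma>2 S_R2) * Lam"
  unfolding box_measure
  by (intro mult_right_mono mult_mono cgauss_measure_upper pos Lam_pos[THEN less_imp_le] measure_nonneg)
     (auto intro!: divide_nonneg_pos pos mult_pos_pos)

lemma box_lower: "t0 \<ge> 0 \<Longrightarrow> t1 \<ge> 0 \<Longrightarrow> t2 \<ge> 0 \<Longrightarrow> t0 \<le> \<sigma>2 S_D \<Longrightarrow> t1 \<le> \<sigma>2 S_R1 \<Longrightarrow> t2 \<le> \<sigma>2 S_R2 \<Longrightarrow>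
  (exp (-1) * t0 / \<sigma>2 S_D) * (exp (-1) * t1 / \<sigma>2 S_R1) * (exp (-1) * t2 / \<sigma>2 S_R2) * Lam
   \<le> measure (gains_measure \<sigma>2) (PiE UNIV (boxA t0 t1 t2))"
  unfolding box_measure
  by (intro mult_right_mono mult_mono cgauss_measure_lower pos Lam_pos[THEN less_imp_le] measure_nonneg)
     (auto intro!: divide_nonneg_pos pos mult_pos_pos)

lemma box_sets: "PiE UNIV (boxA t0 t1 t2) \<in> sets (gains_measure \<sigma>2)"
  unfolding gains_measure_def by (intro sets_PiM_I_finite) auto

end


definition boxB :: "link set \<Rightarrow> real \<Rightarrow> link \<Rightarrow> complex set" where
  "boxB L t l = (if l \<in> L then ball 0 (sqrt t) else UNIV)"

lemma boxB_mem: "g \<in> PiE UNIV (boxB L t) \<longleftrightarrow> (\<forall>l\<in>L. (cmod (g l))\<^sup>2 < t)"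
  unfolding boxB_def PiE_def Pi_def using sqrt_ball_iff[symmetric]
  by (auto split: if_splits)

lemma log_nn: "y \<ge> 0 \<Longrightarrow> 0 \<le> log 2 (1 + y)"
  by (subst zero_le_log_cancel_iff) auto

context gains begin

lemma boxB_emeasure: "emeasure (gains_measure \<sigma>2) (PiE UNIV (boxB L t)) =
   ennreal (\<Prod>l\<in>UNIV. measure (cgauss (\<sigma>2 l)) (boxB L t l))"
proof -
  have "emeasure (gains_measure \<sigma>2) (PiE UNIV (boxB L t)) = (\<Prod>l\<in>UNIV. emeasure (cgauss (\<sigma>2 l)) (boxB L t l))"
    unfolding gains_measure_def by (rule product_sigma_finite.emeasure_PiM[OF PS]) (auto simp: boxB_def)
  also have "\<dots> = (\<Prod>l\<in>UNIV. ennreal (measure (cgauss (\<sigma>2 l)) (boxB L t l)))"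
    by (simp add: finite_measure.emeasure_eq_measure[OF cgauss_finite_measure[OF pos]])
  also have "\<dots> = ennreal (\<Prod>l\<in>UNIV. measure (cgauss (\<sigma>2 l)) (boxB L t l))"
    by (rule prod_ennreal) simp
  finally show ?thesis .
qed

lemma boxB_measure: "measure (gains_measure \<sigma>2) (PiE UNIV (boxB L t)) =
   (\<Prod>l\<in>UNIV. measure (cgauss (\<sigma>2 l)) (boxB L t l))"
  unfolding measure_def boxB_emeasure by (simp add: prod_nonneg)

definition CB where "CB L = (\<Prod>l\<in>UNIV. (if l \<in> L then 1 / \<sigma>2 l else measure (cgauss (\<sigma>2 l)) UNIV))"

lemma boxB_upper: "t \<ge> 0 \<Longrightarrow> measure (gains_measure \<sigma>2) (PiE UNIV (boxB L t)) \<le> t ^ card L * CB L"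
proof -
  assume t: "t \<ge> 0"
  have "measure (gains_measure \<sigma>2) (PiE UNIV (boxB L t)) \<le> (\<Prod>l\<in>UNIV. (if l \<in> L then t else 1) * (if l \<in> L then 1 / \<sigma>2 l else measure (cgauss (\<sigma>2 l)) UNIV))"
    unfolding boxB_measure
  proof (rule prod_mono)
    fix l :: link
    show "0 \<le> measure (cgauss (\<sigma>2 l)) (boxB L t l) \<and> measure (cgauss (\<sigma>2 l)) (boxB L t l) \<le> (if l \<in> L then t else 1) * (if l \<in> L then 1 / \<sigma>2 l else measure (cgauss (\<sigma>2 l)) UNIV)"
      using cgauss_measure_upper[OF pos t, of l] by (auto simp: boxB_def)
  qed
  also have "\<dots> = (\<Prod>l\<in>UNIV. (if l \<in> L then t else 1)) * CB L"
    unfolding CB_def by (rule prod.distrib)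
  also have "(\<Prod>l\<in>UNIV. (if l \<in> L then t else 1)) = t ^ card L"
    by (simp add: prod.If_cases)
  finally show ?thesis .
qed

lemma boxB_sets: "PiE UNIV (boxB L t) \<in> sets (gains_measure \<sigma>2)"
  unfolding gains_measure_def by (intro sets_PiM_I_finite) (auto simp: boxB_def)

lemma gains_finite: "finite_measure (gains_measure \<sigma>2)"
proof (rule finite_measureI)
  have "space (gains_measure \<sigma>2) = PiE UNIV (boxB {} 0)"
    by (simp add: boxB_def PiE_def extensional_def Pi_def)
  moreover have "emeasure (gains_measure \<sigma>2) (PiE UNIV (boxB {} 0)) \<noteq> \<infinity>"
    by (simp add: boxB_emeasure)
  ultimately show "emeasure (gains_measure \<sigma>2) (space (gains_measure \<sigma>2)) \<noteq> \<infinity>" by metis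
qed

end

locale scheme = wave2 + gains
begin

lemma comp_meas[measurable]: "(\<lambda>g. g l) \<in> borel_measurable (gains_measure \<sigma>2)"
proof -
  have "(\<lambda>g. g l) \<in> measurable (gains_measure \<sigma>2) (cgauss (\<sigma>2 l))"
    unfolding gains_measure_def by (rule measurable_component_singleton) simp
  moreover have "measurable (gains_measure \<sigma>2) (cgauss (\<sigma>2 l)) = measurable (gains_measure \<sigma>2) borel"
    by (rule measurable_cong_sets) auto
  ultimately show ?thesis by simp
qed

lemma Astc_meas: "(\<lambda>g. I_Astc s Ts \<tau> \<rho> R g) \<in> borel_measurable (gains_measure \<sigma>2)"
  unfolding I_Astc_def Let_def decodes_def by measurable

lemma out_sets: "{g \<in> space (gains_measure \<sigma>2). I_Astc s Ts \<tau> \<rho> R g < R} \<in> sets (gains_measure \<sigma>2)"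
  using Astc_meas[of \<rho> R] by measurable

lemma log_lt_iff: "y \<ge> 0 \<Longrightarrow> log 2 (1 + y) < 2 * R \<longleftrightarrow> 1 + y < 2 powr (2 * R)"
  by (rule log_less_iff) auto

lemma ESD_nn: "\<rho> \<ge> 0 \<Longrightarrow> 0 \<le> I_ESD s Ts \<tau> \<rho> a"
proof -
  assume r: "\<rho> \<ge> 0"
  have "0 \<le> \<rho> * (cmod a)\<^sup>2 * cT" using r cT by simp
  then show ?thesis using ESD_lower[OF r, of a] log_nn by (meson order_trans)
qed

lemma MacA_nn: "\<rho> \<ge> 0 \<Longrightarrow> 0 \<le> I_EMacA s Ts \<tau> \<rho> a1 a2"
proof -
  assume r: "\<rho> \<ge> 0"
  have "0 \<le> \<rho> * (cmod a1)\<^sup>2 * cT" using r cT by simp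
  then show ?thesis using MacA_lower1[OF r, of a1 a2] log_nn by (meson order_trans)
qed

definition "L1 = {S_D, S_R1, S_R2}"
definition "L2 = {S_D, R1_D, S_R2}"
definition "L3 = {S_D, R2_D, S_R1}"
definition "L4 = {S_D, R1_D, R2_D}"

context
  fixes \<rho> R :: real
  assumes rho: "\<rho> > 0" and R: "R > 0"
begin

definition "K = 2 powr (2 * R)"
definition "wt = K / (\<rho> * cT)"
definition "th = (K - 1) / \<rho>"

lemma K_gt1: "K > 1" unfolding K_def using R by simp

lemma L_imp: "log 2 (1 + \<rho> * (cmod a)\<^sup>2 * cT) < 2 * R \<Longrightarrow> (cmod a)\<^sup>2 < wt"
proof -
  assume l: "log 2 (1 + \<rho> * (cmod a)\<^sup>2 * cT) < 2 * R"
  have "1 + \<rho> * (cmod a)\<^sup>2 * cT < K" using l log_lt_iff[of "\<rho> * (cmod a)\<^sup>2 * cT" R] rho cT unfolding K_def by simp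
  then have "(cmod a)\<^sup>2 * (\<rho> * cT) < K" by (simp add: algebra_simps)
  then show "(cmod a)\<^sup>2 < wt" unfolding wt_def using rho cT by (simp add: pos_less_divide_eq)
qed

lemma nd_imp: "\<not> decodes \<rho> R a \<Longrightarrow> (cmod a)\<^sup>2 < wt"
proof -
  assume "\<not> decodes \<rho> R a"
  then have "log 2 (1 + \<rho> * (cmod a)\<^sup>2) < 2 * R" unfolding decodes_def by simp
  then have "1 + \<rho> * (cmod a)\<^sup>2 < K" using log_lt_iff[of "\<rho> * (cmod a)\<^sup>2" R] rho unfolding K_def by simp
  then have "(cmod a)\<^sup>2 * \<rho> < K" by (simp add: algebra_simps)
  then have a: "(cmod a)\<^sup>2 < K / \<rho>" using rho by (simp add: pos_less_divide_eq)
  have "K / \<rho> \<le> K / (\<rho> * cT)" using K_gt1 rho cT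
    by (intro divide_left_mono) (auto intro: mult_left_le)
  then show ?thesis using a unfolding wt_def by linarith
qed

lemma th_imp: "(cmod a)\<^sup>2 < th \<Longrightarrow> \<not> decodes \<rho> R a"
proof -
  assume "(cmod a)\<^sup>2 < th"
  then have "(cmod a)\<^sup>2 * \<rho> < K - 1" unfolding th_def using rho by (simp add: pos_less_divide_eq)
  then have "1 + \<rho> * (cmod a)\<^sup>2 < K" by (simp add: algebra_simps)
  then have "log 2 (1 + \<rho> * (cmod a)\<^sup>2) < 2 * R" using log_lt_iff[of "\<rho> * (cmod a)\<^sup>2" R] rho unfolding K_def by simp
  then show ?thesis unfolding decodes_def by simp
qed


lemma upper_incl: "{g \<in> space (gains_measure \<sigma>2). I_Astc s Ts \<tau> \<rho> R g < R} \<subseteq>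
   PiE UNIV (boxB L1 wt) \<union> PiE UNIV (boxB L2 wt) \<union> PiE UNIV (boxB L3 wt) \<union> PiE UNIV (boxB L4 wt)"
proof
  fix g assume "g \<in> {g \<in> space (gains_measure \<sigma>2). I_Astc s Ts \<tau> \<rho> R g < R}"
  then have I: "I_Astc s Ts \<tau> \<rho> R g < R" by simp
  have r0: "\<rho> \<ge> 0" using rho by simp
  note e = ESD_lower[OF r0] ESD_nn[OF r0] MacA_lower1[OF r0] MacA_lower2[OF r0] MacA_nn[OF r0]
  have small: "\<And>a X. X < 2 * R \<Longrightarrow> log 2 (1 + \<rho> * (cmod a)\<^sup>2 * cT) \<le> X \<Longrightarrow> (cmod a)\<^sup>2 < wt"
    by (rule L_imp) linarith
  have x0: "(cmod (g S_D))\<^sup>2 < wt"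
  proof (rule small)
    have n: "0 \<le> I_EMacA s Ts \<tau> \<rho> (g R1_D) (g R2_D)" "0 \<le> I_ESD s Ts \<tau> \<rho> (g R1_D)" "0 \<le> I_ESD s Ts \<tau> \<rho> (g R2_D)"
      using e(2,5) by auto
    show "I_ESD s Ts \<tau> \<rho> (g S_D) < 2 * R"
      using I n unfolding I_Astc_def Let_def by (auto split: if_splits)
  qed (rule e(1))
  consider "decodes \<rho> R (g S_R1)" "decodes \<rho> R (g S_R2)" | "decodes \<rho> R (g S_R1)" "\<not> decodes \<rho> R (g S_R2)"
    | "\<not> decodes \<rho> R (g S_R1)" "decodes \<rho> R (g S_R2)" | "\<not> decodes \<rho> R (g S_R1)" "\<not> decodes \<rho> R (g S_R2)"
    by blast
  then show "g \<in> PiE UNIV (boxB L1 wt) \<union> PiE UNIV (boxB L2 wt) \<union> PiE UNIV (boxB L3 wt) \<union> PiE UNIV (boxB L4 wt)"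
  proof cases
    case 1
    then have M: "I_EMacA s Ts \<tau> \<rho> (g R1_D) (g R2_D) < 2 * R"
      using I e(2)[of "g S_D"] unfolding I_Astc_def Let_def by auto
    have "(cmod (g R1_D))\<^sup>2 < wt" by (rule small[OF M e(3)])
    moreover have "(cmod (g R2_D))\<^sup>2 < wt" by (rule small[OF M e(4)])
    ultimately have "g \<in> PiE UNIV (boxB L4 wt)" using x0 unfolding boxB_mem L4_def by auto
    then show ?thesis by blast
  next
    case 2
    then have M: "I_ESD s Ts \<tau> \<rho> (g R1_D) < 2 * R"
      using I e(2)[of "g S_D"] unfolding I_Astc_def Let_def by auto
    have "(cmod (g R1_D))\<^sup>2 < wt" by (rule small[OF M e(1)])
    moreover have "(cmod (g S_R2))\<^sup>2 < wt" using 2 by (intro nd_imp) auto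
    ultimately have "g \<in> PiE UNIV (boxB L2 wt)" using x0 unfolding boxB_mem L2_def by auto
    then show ?thesis by blast
  next
    case 3
    then have M: "I_ESD s Ts \<tau> \<rho> (g R2_D) < 2 * R"
      using I e(2)[of "g S_D"] unfolding I_Astc_def Let_def by auto
    have "(cmod (g R2_D))\<^sup>2 < wt" by (rule small[OF M e(1)])
    moreover have "(cmod (g S_R1))\<^sup>2 < wt" using 3 by (intro nd_imp) auto
    ultimately have "g \<in> PiE UNIV (boxB L3 wt)" using x0 unfolding boxB_mem L3_def by auto
    then show ?thesis by blast
  next
    case 4
    have "(cmod (g S_R1))\<^sup>2 < wt" "(cmod (g S_R2))\<^sup>2 < wt" using 4 by (auto intro: nd_imp)
    then have "g \<in> PiE UNIV (boxB L1 wt)" using x0 unfolding boxB_mem L1_def by auto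
    then show ?thesis by blast
  qed
qed

lemma lower_incl: "PiE UNIV (boxA (th / 2) th th) \<subseteq> {g \<in> space (gains_measure \<sigma>2). I_Astc s Ts \<tau> \<rho> R g < R}"
proof
  fix g assume "g \<in> PiE UNIV (boxA (th / 2) th th)"
  then have x: "(cmod (g S_D))\<^sup>2 < th / 2" "(cmod (g S_R1))\<^sup>2 < th" "(cmod (g S_R2))\<^sup>2 < th"
    unfolding box_eq by auto
  have nd: "\<not> decodes \<rho> R (g S_R1)" "\<not> decodes \<rho> R (g S_R2)" using th_imp[OF x(2)] th_imp[OF x(3)] by auto
  have r0: "\<rho> \<ge> 0" using rho by simp
  have "I_ESD s Ts \<tau> \<rho> (g S_D) \<le> log 2 (1 + \<rho> * (cmod (g S_D))\<^sup>2 * 2)" by (rule ESD_upper[OF r0])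
  also have "\<dots> < 2 * R"
  proof (subst log_lt_iff)
    show "0 \<le> \<rho> * (cmod (g S_D))\<^sup>2 * 2" using r0 by simp
    have "(cmod (g S_D))\<^sup>2 * 2 * \<rho> < K - 1" using x(1) rho unfolding th_def by (simp add: field_simps)
    then show "1 + \<rho> * (cmod (g S_D))\<^sup>2 * 2 < 2 powr (2 * R)" unfolding K_def by (simp add: algebra_simps)
  qed
  finally have "I_Astc s Ts \<tau> \<rho> R g < R" using nd unfolding I_Astc_def Let_def by simp
  then show "g \<in> {g \<in> space (gains_measure \<sigma>2). I_Astc s Ts \<tau> \<rho> R g < R}" by simp
qed

end
end


context scheme begin

definition "Aconst = CB L1 + CB L2 + CB L3 + CB L4"
definition "Bconst = exp (-1) / (2 * \<sigma>2 S_D) * (exp (-1) / \<sigma>2 S_R1) * (exp (-1) / \<sigma>2 S_R2) * Lam"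

lemma CB_pos: "CB L > 0"
  unfolding CB_def using pos cgauss_total_pos[OF pos] by (intro prod_pos) auto

lemma Aconst_pos: "Aconst > 0" unfolding Aconst_def using CB_pos by (simp add: add_pos_pos)
lemma Bconst_pos: "Bconst > 0" unfolding Bconst_def using pos Lam_pos by simp

lemma card_L: "card L1 = 3" "card L2 = 3" "card L3 = 3" "card L4 = 3"
  unfolding L1_def L2_def L3_def L4_def by simp_all

lemma outage_upper:
  assumes rho: "\<rho> > 0" and R: "R > 0"
  shows "measure (gains_measure \<sigma>2) {g \<in> space (gains_measure \<sigma>2). I_Astc s Ts \<tau> \<rho> R g < R}
     \<le> Aconst * (wt \<rho> R) ^ 3"
proof -
  interpret F: finite_measure "gains_measure \<sigma>2" by (rule gains_finite)
  have w: "wt \<rho> R \<ge> 0" unfolding wt_def[OF rho R] using K_gt1[OF rho R] rho cT by simp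
  let ?B = "\<lambda>L. PiE UNIV (boxB L (wt \<rho> R))"
  have "measure (gains_measure \<sigma>2) {g \<in> space (gains_measure \<sigma>2). I_Astc s Ts \<tau> \<rho> R g < R}
     \<le> measure (gains_measure \<sigma>2) (?B L1 \<union> ?B L2 \<union> ?B L3 \<union> ?B L4)"
    by (rule F.finite_measure_mono[OF upper_incl[OF rho R]]) (intro sets.Un boxB_sets)
  also have "\<dots> \<le> measure (gains_measure \<sigma>2) (?B L1) + measure (gains_measure \<sigma>2) (?B L2)
      + measure (gains_measure \<sigma>2) (?B L3) + measure (gains_measure \<sigma>2) (?B L4)"
  proof -
    have s: "\<And>L. ?B L \<in> sets (gains_measure \<sigma>2)" by (rule boxB_sets)
    have "measure (gains_measure \<sigma>2) (?B L1 \<union> ?B L2 \<union> ?B L3 \<union> ?B L4) \<le> measure (gains_measure \<sigma>2) (?B L1 \<union> ?B L2 \<union> ?B L3) + measure (gains_measure \<sigma>2) (?B L4)"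
      by (intro measure_Un_le sets.Un s)
    moreover have "measure (gains_measure \<sigma>2) (?B L1 \<union> ?B L2 \<union> ?B L3) \<le> measure (gains_measure \<sigma>2) (?B L1 \<union> ?B L2) + measure (gains_measure \<sigma>2) (?B L3)"
      by (intro measure_Un_le sets.Un s)
    moreover have "measure (gains_measure \<sigma>2) (?B L1 \<union> ?B L2) \<le> measure (gains_measure \<sigma>2) (?B L1) + measure (gains_measure \<sigma>2) (?B L2)"
      by (intro measure_Un_le sets.Un s)
    ultimately show ?thesis by linarith
  qed
  also have "\<dots> \<le> (wt \<rho> R) ^ 3 * CB L1 + (wt \<rho> R) ^ 3 * CB L2 + (wt \<rho> R) ^ 3 * CB L3 + (wt \<rho> R) ^ 3 * CB L4"
    using boxB_upper[OF w] card_L by (intro add_mono) metis+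
  also have "\<dots> = Aconst * (wt \<rho> R) ^ 3" unfolding Aconst_def by (simp add: algebra_simps)
  finally show ?thesis .
qed

lemma outage_lower:
  assumes rho: "\<rho> > 0" and R: "R > 0"
    and t0: "th \<rho> R \<le> \<sigma>2 S_D" and t1: "th \<rho> R \<le> \<sigma>2 S_R1" and t2: "th \<rho> R \<le> \<sigma>2 S_R2"
  shows "Bconst * (th \<rho> R) ^ 3 \<le> measure (gains_measure \<sigma>2) {g \<in> space (gains_measure \<sigma>2). I_Astc s Ts \<tau> \<rho> R g < R}"
proof -
  interpret F: finite_measure "gains_measure \<sigma>2" by (rule gains_finite)
  have t: "th \<rho> R \<ge> 0" unfolding th_def[OF rho R] using K_gt1[OF rho R] rho by simp
  have "Bconst * (th \<rho> R) ^ 3 = (exp (-1) * (th \<rho> R / 2) / \<sigma>2 S_D) * (exp (-1) * th \<rho> R / \<sigma>2 S_R1) * (exp (-1) * th \<rho> R / \<sigma>2 S_R2) * Lam"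
    unfolding Bconst_def by (simp add: field_simps power3_eq_cube)
  also have "\<dots> \<le> measure (gains_measure \<sigma>2) (PiE UNIV (boxA (th \<rho> R / 2) (th \<rho> R) (th \<rho> R)))"
    using t t0 t1 t2 pos[of S_D] by (intro box_lower) auto
  also have "\<dots> \<le> measure (gains_measure \<sigma>2) {g \<in> space (gains_measure \<sigma>2). I_Astc s Ts \<tau> \<rho> R g < R}"
    by (rule F.finite_measure_mono[OF lower_incl[OF rho R] out_sets])
  finally show ?thesis .
qed

end


lemma powr_log_rate: "x > 0 \<Longrightarrow> (2::real) powr (2 * (r * log 2 x)) = x powr (2 * r)"
proof -
  assume x: "x > 0"
  have "(2::real) powr (2 * (r * log 2 x)) = (2 powr (log 2 x)) powr (2 * r)"
    by (simp add: powr_powr algebra_simps)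
  also have "\<dots> = x powr (2 * r)" using x by simp
  finally show ?thesis .
qed

lemma lim_lo_gen:
  fixes \<sigma> r A c :: real assumes "\<sigma> > 0" "r > 0" "r < 1/2" "c > 0" "A > 0"
  shows "((\<lambda>S. (- ln A - 3 * ln ((1+S*\<sigma>) powr (2*r)/(2/3*S*c))) / ln S) \<longlongrightarrow> 3*(1-2*r)) at_top"
  using assms by real_asymp

lemma lim_hi_gen:
  fixes \<sigma> r A :: real assumes "\<sigma> > 0" "r > 0" "r < 1/2" "A > 0"
  shows "((\<lambda>S. (- ln A - 3 * ln (((1+S*\<sigma>) powr (2*r) - 1)/(2/3*S))) / ln S) \<longlongrightarrow> 3*(1-2*r)) at_top"
  using assms by real_asymp

lemma lim_t_gen:
  fixes \<sigma> r :: real assumes "\<sigma> > 0" "r > 0" "r < 1/2"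
  shows "((\<lambda>S. ((1+S*\<sigma>) powr (2*r) - 1)/(2/3*S)) \<longlongrightarrow> 0) at_top"
  using assms by real_asymp

theorem theorem9:
  fixes s :: "real \<Rightarrow> real" and Ts \<tau> r :: real and \<sigma>2 :: "link \<Rightarrow> real"
  assumes "\<And>l. \<sigma>2 l > 0"
    and "0 < r" and "r < 1 / 2"
    and "0 < Ts" and "0 < \<tau>" and "\<tau> < Ts"
    and "s \<in> borel_measurable lborel"
    and "\<And>t. t \<notin> {0..2 * Ts} \<Longrightarrow> s t = 0"
    and "integrable lborel (\<lambda>t. (s t)\<^sup>2)"
    and "(LINT t|lborel. (s t)\<^sup>2) = 1"
    and "lin_indep_cond s Ts \<tau> 2"
  shows "((\<lambda>SNR. - ln (outage_prob s Ts \<tau> \<sigma>2 r SNR) / ln SNR) \<longlongrightarrow> 3 * (1 - 2 * r)) at_top"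
proof -
  note a = assms
  interpret scheme s Ts \<tau> \<sigma>2
    by unfold_locales (use a in auto)
  define \<sigma> where "\<sigma> = \<sigma>2 S_D"
  have \<sigma>: "\<sigma> > 0" unfolding \<sigma>_def by (rule a(1))
  have r: "0 < r" "r < 1/2" using a by auto
  define m where "m = min (\<sigma>2 S_D) (min (\<sigma>2 S_R1) (\<sigma>2 S_R2))"
  have m: "m > 0" unfolding m_def using a(1) by simp
  define wS where "wS S = (1 + S * \<sigma>) powr (2 * r) / (2 / 3 * S * cT)" for S :: real
  define tS where "tS S = ((1 + S * \<sigma>) powr (2 * r) - 1) / (2 / 3 * S)" for S :: real
  define flo where "flo S = (- ln Aconst - 3 * ln (wS S)) / ln S" for S :: real
  define fhi where "fhi S = (- ln Bconst - 3 * ln (tS S)) / ln S" for S :: real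
  have cT': "cT > 0" using cT by simp
  have lim_lo: "(flo \<longlongrightarrow> 3 * (1 - 2 * r)) at_top"
    unfolding flo_def wS_def using lim_lo_gen[OF \<sigma> r cT' Aconst_pos] .
  have lim_hi: "(fhi \<longlongrightarrow> 3 * (1 - 2 * r)) at_top"
    unfolding fhi_def tS_def using lim_hi_gen[OF \<sigma> r Bconst_pos] .
  have lim_t: "(tS \<longlongrightarrow> 0) at_top"
    unfolding tS_def using lim_t_gen[OF \<sigma> r] .
  have ev_t: "eventually (\<lambda>S. tS S < m) at_top"
    using order_tendstoD(2)[OF lim_t m] .
  have main: "flo S \<le> - ln (outage_prob s Ts \<tau> \<sigma>2 r S) / ln S \<and> - ln (outage_prob s Ts \<tau> \<sigma>2 r S) / ln S \<le> fhi S"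
    if S: "S > 1" and tm: "tS S < m" for S
  proof -
    define \<rho> where "\<rho> = rho0 S"
    define R where "R = rate \<sigma>2 r S"
    have rho: "\<rho> > 0" unfolding \<rho>_def rho0_def using S by simp
    have "1 + S * \<sigma> > 1" using S \<sigma> by simp
    then have lg: "log 2 (1 + S * \<sigma>) > 0" by simp
    have R: "R > 0" unfolding R_def rate_def \<sigma>_def[symmetric] using lg r by simp
    have Rv: "R = r * log 2 (1 + S * \<sigma>)" unfolding R_def rate_def \<sigma>_def ..
    have "1 + S * \<sigma> > 0" using \<sigma> S by (simp add: add_pos_nonneg)
    then have KK: "K R = (1 + S * \<sigma>) powr (2 * r)"
      using K_def[OF rho R] powr_log_rate[of "1 + S * \<sigma>" r] unfolding Rv by simp
    have rv: "\<rho> = 2 / 3 * S" unfolding \<rho>_def rho0_def ..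
    have wt: "wt \<rho> R = wS S" using wt_def[OF rho R] unfolding KK wS_def rv by simp
    have th: "th \<rho> R = tS S" using th_def[OF rho R] unfolding KK tS_def rv by simp
    have P: "outage_prob s Ts \<tau> \<sigma>2 r S = measure (gains_measure \<sigma>2) {g \<in> space (gains_measure \<sigma>2). I_Astc s Ts \<tau> \<rho> R g < R}"
      unfolding outage_prob_def \<rho>_def R_def ..
    have tpos: "tS S > 0" using K_gt1[OF rho R] rho unfolding th[symmetric] th_def[OF rho R] by simp
    have wpos: "wS S > 0" using K_gt1[OF rho R] rho cT' unfolding wt[symmetric] wt_def[OF rho R] by simp
    have up: "outage_prob s Ts \<tau> \<sigma>2 r S \<le> Aconst * (wS S) ^ 3"
      unfolding P wt[symmetric] by (rule outage_upper[OF rho R])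
    have "th \<rho> R \<le> \<sigma>2 S_D" "th \<rho> R \<le> \<sigma>2 S_R1" "th \<rho> R \<le> \<sigma>2 S_R2"
      using tm unfolding th m_def by auto
    then have "Bconst * (th \<rho> R) ^ 3 \<le> measure (gains_measure \<sigma>2) {g \<in> space (gains_measure \<sigma>2). I_Astc s Ts \<tau> \<rho> R g < R}"
      by (rule outage_lower[OF rho R])
    then have lo: "Bconst * (tS S) ^ 3 \<le> outage_prob s Ts \<tau> \<sigma>2 r S"
      unfolding P th .
    have Ppos: "outage_prob s Ts \<tau> \<sigma>2 r S > 0"
      using lo Bconst_pos tpos by (meson less_le_trans mult_pos_pos zero_less_power)
    have lnS: "ln S > 0" using S by simp
    have l1: "ln (outage_prob s Ts \<tau> \<sigma>2 r S) \<le> ln Aconst + 3 * ln (wS S)"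
    proof -
      have "ln (outage_prob s Ts \<tau> \<sigma>2 r S) \<le> ln (Aconst * (wS S) ^ 3)"
        using up Ppos by simp
      also have "\<dots> = ln Aconst + 3 * ln (wS S)" using Aconst_pos wpos by (simp add: ln_mult ln_realpow)
      finally show ?thesis .
    qed
    have l2: "ln Bconst + 3 * ln (tS S) \<le> ln (outage_prob s Ts \<tau> \<sigma>2 r S)"
    proof -
      have "ln Bconst + 3 * ln (tS S) = ln (Bconst * (tS S) ^ 3)" using Bconst_pos tpos by (simp add: ln_mult ln_realpow)
      also have "\<dots> \<le> ln (outage_prob s Ts \<tau> \<sigma>2 r S)"
        using lo Ppos Bconst_pos tpos by simp
      finally show ?thesis .
    qed
    have "(- ln Aconst - 3 * ln (wS S)) / ln S \<le> - ln (outage_prob s Ts \<tau> \<sigma>2 r S) / ln S"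
      using l1 lnS by (intro divide_right_mono) auto
    moreover have "- ln (outage_prob s Ts \<tau> \<sigma>2 r S) / ln S \<le> (- ln Bconst - 3 * ln (tS S)) / ln S"
      using l2 lnS by (intro divide_right_mono) auto
    ultimately show ?thesis unfolding flo_def fhi_def by simp
  qed
  have ev: "eventually (\<lambda>S. flo S \<le> - ln (outage_prob s Ts \<tau> \<sigma>2 r S) / ln S \<and> - ln (outage_prob s Ts \<tau> \<sigma>2 r S) / ln S \<le> fhi S) at_top"
    using ev_t eventually_gt_at_top[of 1] by eventually_elim (use main in auto)
  show ?thesis
    by (rule tendsto_sandwich[OF _ _ lim_lo lim_hi]) (use ev in \<open>auto elim: eventually_mono\<close>)
qed


end
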